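(* Let $n\ge3$ and $1\le i,j\le n-1$ with $|i-j|>1$. Then $x_i+x_{i+1}-x_j-x_{j+1}\in R(g_ig_j)$.
   Context: Let $d,n\ge1$ be integers and $u$ an indeterminate. The Yokonuma–Hecke algebra $\mathrm{Y}_{d,n}(u)$ is the associative $\mathbb{C}[u,u^{-1}]$-algebra generated by $g_1,\dots,g_{n-1},t_1,\dots,t_n$ subject to: $g_ig_j=g_jg_i$ for $|i-j|>1$; $g_ig_{i+1}g_i=g_{i+1}g_ig_{i+1}$ for $1\le i\le n-2$; $t_it_j=t_jt_i$ for all $i,j$; $t_jg_i=g_it_{s_i(j)}$ for all $i,j$, where $s_i$ is the transposition $(i,i+1)$; $t_j^d=1$ for all $j$; and $g_i^2=1+(u-1)e_i+(u-1)e_ig_i$, where $e_i=\frac1d\sum_{s=0}^{d-1}t_i^st_{i+1}^{-s}$. For $n\ge3$, the Yokonuma–Temperley–Lieb algebra $\mathrm{YTL}_{d,n}(u)$ is the quotient of $\mathrm{Y}_{d,n}(u)$ by the two-sided ideal generated by the elements $g_ig_{i+1}g_i+g_ig_{i+1}+g_{i+1}g_i+g_i+g_{i+1}+1$, $1\le i\le n-2$; images of the generators are denoted by the same letters. A word is an element of the form $w=t_1^{r_1}\cdots t_n^{r_n}g_{j_1}\cdots g_{j_m}$; its degree is $\deg(w)=m$. $\mathfrak{T}_n$ is the set of pairs $(\underline{i},\underline{k})$ of $p$-tuples of non-negative integers $(i_1,\dots,i_p)$, $(k_1,\dots,k_p)$, $0\le p\le n-1$, with $1\le i_1<\dots<i_p\le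 n-1$ and $1\le i_1-k_1<\dots<i_p-k_p\le n-1$; $g_{\underline{i},\underline{k}}=\prod_{j=1}^p(g_{i_j}g_{i_j-1}\cdots g_{i_j-k_j})$, $g_{\emptyset,\emptyset}=1$. Let $S=\{t_1^{r_1}\cdots t_n^{r_n}g_{\underline{i},\underline{k}}\mid(\underline{i},\underline{k})\in\mathfrak{T}_n,\ r_j\in\{0,\dots,d-1\}\}$ and $S^{<w}=\{s\in S\mid \deg(s)<\deg(w)\}$. Let $A_{d,n}$ be the complex group algebra of $(\mathbb Z/d\mathbb Z)^n$ with commuting generators $x_1,\dots,x_n$, $x_j^d=1$. For a word $w$, $R(w)=\{P\in A_{d,n}\mid P(t_1,\dots,t_n)\,w\in\mathrm{Span}_{\mathbb{C}[u,u^{-1}]}(S^{<w})\}$, an ideal of $A_{d,n}$. *)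

theory Defs
  imports Complex_Main
begin

datatype gen = Gg nat | Tt nat | Uu | Ui

text \<open>Elements of the free C-algebra: coefficient functions on words (lists of generators);
  all elements we build are finitely supported.\<close>
type_synonym fa = "gen list \<Rightarrow> complex"

definition fzero :: fa where "fzero = (\<lambda>_. 0)"
definition fone :: fa where "fone = (\<lambda>w. if w = [] then 1 else 0)"
definition fgen :: "gen \<Rightarrow> fa" where "fgen x = (\<lambda>w. if w = [x] then 1 else 0)"
definition fadd :: "fa \<Rightarrow> fa \<Rightarrow> fa" where "fadd f g = (\<lambda>w. f w + g w)"
definition fsub :: "fa \<Rightarrow> fa \<Rightarrow> fa" where "fsub f g = (\<lambda>w. f w - g w)"
definition fscale :: "complex \<Rightarrow> fa \<Rightarrow> fa" where "fscale c f = (\<lambda>w. c * f w)"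
definition fmul :: "fa \<Rightarrow> fa \<Rightarrow> fa" where
  "fmul f g = (\<lambda>w. \<Sum>k\<le>length w. f (take k w) * g (drop k w))"
definition fprod :: "fa list \<Rightarrow> fa" where "fprod xs = foldr fmul xs fone"
definition fpow :: "fa \<Rightarrow> nat \<Rightarrow> fa" where "fpow f k = fprod (replicate k f)"
definition fsumset :: "'a set \<Rightarrow> ('a \<Rightarrow> fa) \<Rightarrow> fa" where
  "fsumset F h = (\<lambda>w. \<Sum>x\<in>F. h x w)"

inductive_set fideal :: "fa set \<Rightarrow> fa set" for Rl :: "fa set" where
  zero: "fzero \<in> fideal Rl"
| gen: "r \<in> Rl \<Longrightarrow> r \<in> fideal Rl"
| add: "a \<in> fideal Rl \<Longrightarrow> b \<in> fideal Rl \<Longrightarrow> fadd a b \<in> fideal Rl"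
| scale: "a \<in> fideal Rl \<Longrightarrow> fscale c a \<in> fideal Rl"
| lmul: "a \<in> fideal Rl \<Longrightarrow> fmul (fgen x) a \<in> fideal Rl"
| rmul: "a \<in> fideal Rl \<Longrightarrow> fmul a (fgen x) \<in> fideal Rl"

section \<open>Defining relations of YTL_{d,n}(u) (over C[u,u^{-1}], u central invertible)\<close>

abbreviation gg :: "nat \<Rightarrow> fa" where "gg i \<equiv> fgen (Gg i)"
abbreviation tt :: "nat \<Rightarrow> fa" where "tt j \<equiv> fgen (Tt j)"
abbreviation uu :: fa where "uu \<equiv> fgen Uu"
abbreviation ui :: fa where "ui \<equiv> fgen Ui"

definition transp :: "nat \<Rightarrow> nat \<Rightarrow> nat" where
  "transp i j = (if j = i then i + 1 else if j = i + 1 then i else j)"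

text \<open>e_i = (1/d) sum_{s<d} t_i^s t_{i+1}^{-s}, with t^{-s} written as t^{(d-s) mod d} (t^d = 1).\<close>
definition ee :: "nat \<Rightarrow> nat \<Rightarrow> fa" where
  "ee d i = fscale (1 / of_nat d)
     (fsumset {0..<d} (\<lambda>s. fmul (fpow (tt i) s) (fpow (tt (i+1)) ((d - s) mod d))))"

definition ytl_rels :: "nat \<Rightarrow> nat \<Rightarrow> fa set" where
  "ytl_rels d n =
     {fsub (fmul uu ui) fone, fsub (fmul ui uu) fone}
   \<union> {fsub (fmul uu (fgen x)) (fmul (fgen x) uu) | x. True}
   \<union> {fsub (fmul ui (fgen x)) (fmul (fgen x) ui) | x. True}
   \<union> {gg i | i. \<not> (1 \<le> i \<and> i \<le> n - 1)}
   \<union> {tt j | j. \<not> (1 \<le> j \<and> j \<le> n)}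
   \<union> {fsub (fmul (gg i) (gg j)) (fmul (gg j) (gg i)) | i j.
        1 \<le> i \<and> i \<le> n - 1 \<and> 1 \<le> j \<and> j \<le> n - 1 \<and> (i + 1 < j \<or> j + 1 < i)}
   \<union> {fsub (fprod [gg i, gg (i+1), gg i]) (fprod [gg (i+1), gg i, gg (i+1)]) | i.
        1 \<le> i \<and> i + 2 \<le> n}
   \<union> {fsub (fmul (tt i) (tt j)) (fmul (tt j) (tt i)) | i j.
        1 \<le> i \<and> i \<le> n \<and> 1 \<le> j \<and> j \<le> n}
   \<union> {fsub (fmul (tt j) (gg i)) (fmul (gg i) (tt (transp i j))) | i j.
        1 \<le> i \<and> i \<le> n - 1 \<and> 1 \<le> j \<and> j \<le> n}
   \<union> {fsub (fpow (tt j) d) fone | j. 1 \<le> j \<and> j \<le> n}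
   \<union> {fsub (fmul (gg i) (gg i))
          (fadd fone (fadd (fmul (fsub uu fone) (ee d i))
                           (fmul (fmul (fsub uu fone) (ee d i)) (gg i)))) | i.
        1 \<le> i \<and> i \<le> n - 1}
   \<union> {fsumset {0..<6::nat} (\<lambda>k. [fprod [gg i, gg (i+1), gg i], fmul (gg i) (gg (i+1)),
          fmul (gg (i+1)) (gg i), gg i, gg (i+1), fone] ! k) | i.
        1 \<le> i \<and> i + 2 \<le> n}"

definition tmono :: "nat \<Rightarrow> (nat \<Rightarrow> nat) \<Rightarrow> fa" where
  "tmono n r = fprod (map (\<lambda>j. fpow (tt j) (r j)) [1..<n+1])"

definition tword :: "nat \<Rightarrow> (nat \<Rightarrow> nat) \<Rightarrow> nat list \<Rightarrow> fa" where
  "tword n r js = fmul (tmono n r) (fprod (map gg js))"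

definition exps :: "nat \<Rightarrow> nat \<Rightarrow> (nat \<Rightarrow> nat) set" where
  "exps d n = {r. \<forall>j. (1 \<le> j \<and> j \<le> n \<longrightarrow> r j < d) \<and> (\<not> (1 \<le> j \<and> j \<le> n) \<longrightarrow> r j = 0)}"

definition Tn :: "nat \<Rightarrow> (nat \<times> nat) list set" where
  "Tn n = {p. length p \<le> n - 1 \<and>
     (\<forall>(i,k)\<in>set p. 1 \<le> i \<and> i \<le> n - 1 \<and> k < i) \<and>
     sorted_wrt (<) (map fst p) \<and> sorted_wrt (<) (map (\<lambda>(i,k). i - k) p)}"

definition gik :: "(nat \<times> nat) list \<Rightarrow> fa" where
  "gik p = fprod (map (\<lambda>(i,k). fprod (map (\<lambda>m. gg (i - m)) [0..<k+1])) p)"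

definition gdeg :: "(nat \<times> nat) list \<Rightarrow> nat" where
  "gdeg p = sum_list (map (\<lambda>(i,k). k + 1) p)"

definition Slt :: "nat \<Rightarrow> nat \<Rightarrow> nat \<Rightarrow> fa set" where
  "Slt d n m = {fmul (tmono n r) (gik p) | r p. r \<in> exps d n \<and> p \<in> Tn n \<and> gdeg p < m}"

definition upow :: "int \<Rightarrow> fa" where
  "upow k = (if 0 \<le> k then fpow uu (nat k) else fpow ui (nat (- k)))"

text \<open>C[u,u^{-1}]-span (representatives in the free algebra).\<close>
definition Lspan :: "fa set \<Rightarrow> fa set" where
  "Lspan X = {fsumset F (\<lambda>(s,k). fscale (c (s,k)) (fmul (upow k) s)) | F c.
                finite F \<and> fst ` F \<subseteq> X}"

text \<open>A_{d,n}: complex group algebra of (Z/dZ)^n, elements as coefficient functions on exps.\<close>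
definition Adn :: "nat \<Rightarrow> nat \<Rightarrow> ((nat \<Rightarrow> nat) \<Rightarrow> complex) set" where
  "Adn d n = {P. \<forall>r. P r \<noteq> 0 \<longrightarrow> r \<in> exps d n}"

definition xvar :: "nat \<Rightarrow> nat \<Rightarrow> (nat \<Rightarrow> nat) \<Rightarrow> complex" where
  "xvar d j = (\<lambda>r. if r = (\<lambda>k. if k = j then 1 mod d else 0) then 1 else 0)"

definition evalA :: "nat \<Rightarrow> nat \<Rightarrow> ((nat \<Rightarrow> nat) \<Rightarrow> complex) \<Rightarrow> fa" where
  "evalA d n P = fsumset (exps d n) (\<lambda>r. fscale (P r) (tmono n r))"

text \<open>R(w) for the word w = t_1^{r_1}...t_n^{r_n} g_{j_1}...g_{j_m}.\<close>
definition Rset :: "nat \<Rightarrow> nat \<Rightarrow> (nat \<Rightarrow> nat) \<Rightarrow> nat list \<Rightarrow> ((nat \<Rightarrow> nat) \<Rightarrow> complex) set" where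
  "Rset d n r js = {P \<in> Adn d n. \<exists>y \<in> Lspan (Slt d n (length js)).
      fsub (fmul (evalA d n P) (tword n r js)) y \<in> fideal (ytl_rels d n)}"

end

theory Submission
  imports Defs "HOL-Library.Function_Algebras"
begin


lemma fmul_assoc:
  fixes f g h :: fa
  shows "fmul (fmul f g) h = fmul f (fmul g h)"
proof
  fix w :: "gen list"
  let ?N = "length w"
  define A where "A l k' = f (take l w) * g (take k' (drop l w)) * h (drop (l+k') w)" for l k'
  have "fmul (fmul f g) h w = (\<Sum>k\<le>?N. \<Sum>l\<le>k. A l (k - l))"
    unfolding fmul_def A_def
    by (auto simp: sum_distrib_right min_def drop_take intro!: sum.cong)
  also have "\<dots> = (\<Sum>(l,k')\<in>{(l,k'). l+k' \<le> ?N}. A l k')"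
    by (rule sum.triangle_reindex_eq[symmetric])
  also have "{(l,k'). l+k' \<le> ?N} = Sigma {..?N} (\<lambda>l. {..?N-l})" by auto
  also have "(\<Sum>(l,k')\<in>Sigma {..?N} (\<lambda>l. {..?N-l}). A l k') = (\<Sum>l\<le>?N. \<Sum>k'\<le>?N-l. A l k')"
    by (rule sum.Sigma[symmetric]) auto
  also have "\<dots> = fmul f (fmul g h) w"
    unfolding fmul_def A_def
    by (auto simp: sum_distrib_left mult.assoc add.commute intro!: sum.cong)
  finally show "fmul (fmul f g) h w = fmul f (fmul g h) w" .
qed

lemma fmul_one_left: "fmul fone f = f"
proof
  fix w show "fmul fone f w = f w"
    unfolding fmul_def fone_def
    by (simp add: sum.atMost_shift)
qed

lemma fmul_one_right: "fmul f fone = f"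
proof
  fix w :: "gen list"
  have "fmul f fone w = (\<Sum>k\<le>length w. if k = length w then f w else 0)"
    unfolding fmul_def fone_def by (intro sum.cong) auto
  then show "fmul f fone w = f w" by simp
qed

lemma fmul_add_left: "fmul (fadd a b) c = fadd (fmul a c) (fmul b c)"
  by (auto simp: fmul_def fadd_def algebra_simps sum.distrib)
lemma fmul_add_right: "fmul c (fadd a b) = fadd (fmul c a) (fmul c b)"
  by (auto simp: fmul_def fadd_def algebra_simps sum.distrib)
lemma fmul_scale_left: "fmul (fscale x a) c = fscale x (fmul a c)"
  by (auto simp: fmul_def fscale_def algebra_simps sum_distrib_left)
lemma fmul_scale_right: "fmul c (fscale x a) = fscale x (fmul c a)"
  by (auto simp: fmul_def fscale_def algebra_simps sum_distrib_left)
lemma fmul_zero_left: "fmul fzero c = fzero"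
  by (auto simp: fmul_def fzero_def)
lemma fmul_zero_right: "fmul c fzero = fzero"
  by (auto simp: fmul_def fzero_def)

inductive fpoly :: "fa \<Rightarrow> bool" where
  "fpoly fone" | "fpoly (fgen x)" | "fpoly fzero"
| "fpoly a \<Longrightarrow> fpoly b \<Longrightarrow> fpoly (fadd a b)"
| "fpoly a \<Longrightarrow> fpoly (fscale c a)"
| "fpoly a \<Longrightarrow> fpoly b \<Longrightarrow> fpoly (fmul a b)"

lemma fsub_eq: "fsub a b = fadd a (fscale (-1) b)"
  by (auto simp: fsub_def fadd_def fscale_def)

lemma fpoly_sub: "fpoly a \<Longrightarrow> fpoly b \<Longrightarrow> fpoly (fsub a b)"
  by (simp add: fsub_eq fpoly.intros)

lemma fideal_sub: "a \<in> fideal R \<Longrightarrow> b \<in> fideal R \<Longrightarrow> fsub a b \<in> fideal R"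
  by (simp add: fsub_eq fideal.intros)

lemma fideal_lmul: "fpoly b \<Longrightarrow> a \<in> fideal R \<Longrightarrow> fmul b a \<in> fideal R"
proof (induction b arbitrary: a rule: fpoly.induct)
  case 1 then show ?case by (simp add: fmul_one_left)
next
  case (2 x) then show ?case by (simp add: fideal.lmul)
next
  case 3 then show ?case by (simp add: fmul_zero_left fideal.zero)
next
  case (4 a b) then show ?case by (simp add: fmul_add_left fideal.add)
next
  case (5 a c) then show ?case by (simp add: fmul_scale_left fideal.scale)
next
  case (6 a b) then show ?case by (simp add: fmul_assoc)
qed

lemma fideal_rmul: "fpoly b \<Longrightarrow> a \<in> fideal R \<Longrightarrow> fmul a b \<in> fideal R"
proof (induction b arbitrary: a rule: fpoly.induct)
  case 1 then show ?case by (simp add: fmul_one_right)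
next
  case (2 x) then show ?case by (simp add: fideal.rmul)
next
  case 3 then show ?case by (simp add: fmul_zero_right fideal.zero)
next
  case (4 a b) then show ?case by (simp add: fmul_add_right fideal.add)
next
  case (5 a c) then show ?case by (simp add: fmul_scale_right fideal.scale)
next
  case (6 a b) then show ?case by (simp flip: fmul_assoc)
qed

typedef fpt = "{f. fpoly f}" morphisms fR fA
  by (auto intro: fpoly.intros)

setup_lifting type_definition_fpt




instantiation fpt :: ring_1
begin
lift_definition zero_fpt :: fpt is fzero by (auto intro: fpoly.intros)
lift_definition one_fpt :: fpt is fone by (auto intro: fpoly.intros)
lift_definition plus_fpt :: "fpt \<Rightarrow> fpt \<Rightarrow> fpt" is fadd by (auto intro: fpoly.intros)
lift_definition minus_fpt :: "fpt \<Rightarrow> fpt \<Rightarrow> fpt" is fsub by (auto intro: fpoly_sub)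
lift_definition uminus_fpt :: "fpt \<Rightarrow> fpt" is "fscale (-1)" by (auto intro: fpoly.intros)
lift_definition times_fpt :: "fpt \<Rightarrow> fpt \<Rightarrow> fpt" is fmul by (auto intro: fpoly.intros)
instance
proof
  fix a b c :: fpt
  show "a * b * c = a * (b * c)" by transfer (simp add: fmul_assoc)
  show "1 * a = a" by transfer (simp add: fmul_one_left)
  show "a * 1 = a" by transfer (simp add: fmul_one_right)
  show "(a + b) * c = a * c + b * c" by transfer (simp add: fmul_add_left)
  show "a * (b + c) = a * b + a * c" by transfer (simp add: fmul_add_right)
  show "a + b + c = a + (b + c)" by transfer (auto simp: fadd_def)
  show "a + b = b + a" by transfer (auto simp: fadd_def)
  show "0 + a = a" by transfer (auto simp: fadd_def fzero_def)
  show "- a + a = 0" by transfer (auto simp: fadd_def fzero_def fscale_def)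
  show "a - b = a + - b" by transfer (auto simp: fadd_def fsub_def fscale_def)
  show "(0::fpt) \<noteq> 1" by transfer (auto simp: fzero_def fone_def fun_eq_iff)
qed
end

definition Iof :: "(nat \<times> nat) option \<Rightarrow> fa set" where
  "Iof p = (case p of None \<Rightarrow> {fzero} | Some q \<Rightarrow> fideal (ytl_rels (fst q) (snd q)))"

lemma Iof_zero: "fzero \<in> Iof p" by (auto simp: Iof_def fideal.zero split: option.split)
lemma Iof_add: "a \<in> Iof p \<Longrightarrow> b \<in> Iof p \<Longrightarrow> fadd a b \<in> Iof p"
  by (cases p) (auto simp: Iof_def fideal.add, auto simp: fadd_def fzero_def)
lemma Iof_scale: "a \<in> Iof p \<Longrightarrow> fscale c a \<in> Iof p"
  by (cases p) (auto simp: Iof_def fideal.scale, auto simp: fscale_def fzero_def)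
lemma Iof_lmul: "fpoly b \<Longrightarrow> a \<in> Iof p \<Longrightarrow> fmul b a \<in> Iof p"
  by (auto simp: Iof_def fideal_lmul fmul_zero_right split: option.split)
lemma Iof_rmul: "fpoly b \<Longrightarrow> a \<in> Iof p \<Longrightarrow> fmul a b \<in> Iof p"
  by (auto simp: Iof_def fideal_rmul fmul_zero_left split: option.split)

definition yrel :: "((nat \<times> nat) option \<Rightarrow> fpt) \<Rightarrow> ((nat \<times> nat) option \<Rightarrow> fpt) \<Rightarrow> bool" where
  "yrel x y \<longleftrightarrow> (\<forall>p. fR (x p - y p) \<in> Iof p)"

lemma fR_sub: "fR (a - b) = fsub (fR a) (fR b)" by transfer simp
lemma fR_add: "fR (a + b) = fadd (fR a) (fR b)" by transfer simp
lemma fR_mult: "fR (a * b) = fmul (fR a) (fR b)" by transfer simp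
lemma fR_zero: "fR 0 = fzero" by transfer simp
lemma fR_poly: "fpoly (fR a)" by transfer simp

lemma yrel_equivp: "equivp yrel"
proof (rule equivpI)
  show "reflp yrel"
    by (rule reflpI) (simp add: yrel_def fR_zero Iof_zero)
  show "symp yrel"
  proof (rule sympI)
    fix x y assume "yrel x y"
    then show "yrel y x" unfolding yrel_def
    proof (intro allI)
      fix p assume "\<forall>p. fR (x p - y p) \<in> Iof p"
      then have "fscale (-1) (fR (x p - y p)) \<in> Iof p"
        by (simp add: Iof_scale)
      moreover have "fscale (-1) (fR (x p - y p)) = fR (y p - x p)"
        by (auto simp: fR_sub fsub_def fscale_def)
      ultimately show "fR (y p - x p) \<in> Iof p" by simp
    qed
  qed
  show "Relation.transp yrel"
  proof (rule transpI)
    fix x y z assume a: "yrel x y" "yrel y z"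
    show "yrel x z" unfolding yrel_def
    proof
      fix p
      have "fadd (fR (x p - y p)) (fR (y p - z p)) \<in> Iof p"
        using a by (simp add: yrel_def Iof_add)
      moreover have "fadd (fR (x p - y p)) (fR (y p - z p)) = fR (x p - z p)"
        by (auto simp: fR_sub fsub_def fadd_def)
      ultimately show "fR (x p - z p) \<in> Iof p" by simp
    qed
  qed
qed

quotient_type yq = "(nat \<times> nat) option \<Rightarrow> fpt" / yrel
  by (rule yrel_equivp)

lemma yrel_eqI: "x = y \<Longrightarrow> yrel x y"
  using yrel_equivp by (simp add: equivp_reflp)

lemma yrel_add: "yrel x x' \<Longrightarrow> yrel y y' \<Longrightarrow> yrel (x + y) (x' + y')"
  unfolding yrel_def
proof (intro allI)
  fix p assume a: "\<forall>p. fR (x p - x' p) \<in> Iof p"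
     "\<forall>p. fR (y p - y' p) \<in> Iof p"
  have "(x + y) p - (x' + y') p = (x p - x' p) + (y p - y' p)" by simp
  then show "fR ((x + y) p - (x' + y') p) \<in> Iof p"
    using a by (simp only: fR_add) (simp add: Iof_add)
qed

lemma yrel_neg: "yrel x x' \<Longrightarrow> yrel (- x) (- x')"
  unfolding yrel_def
proof (intro allI)
  fix p assume a: "\<forall>p. fR (x p - x' p) \<in> Iof p"
  have e: "(- x) p - (- x') p = - (x p - x' p)" by simp
  have n: "fR (- z) = fscale (-1) (fR z)" for z :: fpt by transfer simp
  show "fR ((- x) p - (- x') p) \<in> Iof p"
    unfolding e n by (rule Iof_scale) (use a in simp)
qed

lemma yrel_mult: "yrel x x' \<Longrightarrow> yrel y y' \<Longrightarrow> yrel (x * y) (x' * y')"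
  unfolding yrel_def
proof (intro allI)
  fix p assume a: "\<forall>p. fR (x p - x' p) \<in> Iof p"
     "\<forall>p. fR (y p - y' p) \<in> Iof p"
  have "(x * y) p - (x' * y') p = (x p - x' p) * y p + x' p * (y p - y' p)"
    by (simp add: algebra_simps)
  then show "fR ((x * y) p - (x' * y') p) \<in> Iof p"
    using a by (simp only: fR_add fR_mult) (simp add: Iof_add Iof_lmul Iof_rmul fR_poly)
qed

instantiation yq :: ring_1
begin
lift_definition zero_yq :: yq is 0 .
lift_definition one_yq :: yq is 1 .
lift_definition plus_yq :: "yq \<Rightarrow> yq \<Rightarrow> yq" is "(+)" by (rule yrel_add)
lift_definition uminus_yq :: "yq \<Rightarrow> yq" is uminus by (rule yrel_neg)
lift_definition minus_yq :: "yq \<Rightarrow> yq \<Rightarrow> yq" is "(-)"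
  by (simp only: diff_conv_add_uminus yrel_add yrel_neg)
lift_definition times_yq :: "yq \<Rightarrow> yq \<Rightarrow> yq" is "(*)" by (rule yrel_mult)
instance
proof
  fix a b c :: yq
  show "a * b * c = a * (b * c)" by transfer (simp add: mult.assoc yrel_eqI)
  show "1 * a = a" by transfer (simp add: yrel_eqI)
  show "a * 1 = a" by transfer (simp add: yrel_eqI)
  show "(a + b) * c = a * c + b * c" by transfer (simp add: distrib_right yrel_eqI)
  show "a * (b + c) = a * b + a * c" by transfer (simp add: distrib_left yrel_eqI)
  show "a + b + c = a + (b + c)" by transfer (simp add: add.assoc yrel_eqI)
  show "a + b = b + a" by transfer (simp add: add.commute yrel_eqI)
  show "0 + a = a" by transfer (simp add: yrel_eqI)
  show "- a + a = 0" by transfer (simp add: yrel_eqI)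
  show "a - b = a + - b" by transfer (simp add: yrel_eqI)
  show "(0::yq) \<noteq> 1"
  proof transfer
    show "\<not> yrel 0 1"
    proof
      assume "yrel 0 1"
      then have "fR (0 - 1) \<in> Iof None" by (simp add: yrel_def)
      then have "fR (0 - 1 :: fpt) = fzero" by (simp add: Iof_def)
      moreover have "fR (0 - 1 :: fpt) [] \<noteq> 0" by transfer (simp add: fsub_def fzero_def fone_def)
      ultimately show False by (simp add: fzero_def)
    qed
  qed
qed
end




definition zeta :: "nat \<Rightarrow> complex" where "zeta d = cis (2 * pi / real d)"

lemma zeta_pow_d: "0 < d \<Longrightarrow> zeta d ^ d = 1"
  by (simp add: zeta_def DeMoivre)

lemma zeta_neq0: "zeta d \<noteq> 0" by (simp add: zeta_def)

lemma zeta_pow_neq1: assumes "0 < a" "a < d" shows "zeta d ^ a \<noteq> 1"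
proof
  assume h: "zeta d ^ a = 1"
  have "cis (real a * (2 * pi / real d)) = 1" using h by (simp add: zeta_def DeMoivre)
  then have "Re (cis (real a * (2 * pi / real d))) = 1" by simp
  then have "cos (real a * (2 * pi / real d)) = 1" by simp
  then obtain m :: int where m: "real a * (2 * pi / real d) = of_int m * 2 * pi"
    using cos_one_2pi_int by auto
  then have "real a / real d = m" using assms by (simp add: field_simps)
  moreover have "0 < real a / real d" "real a / real d < 1" using assms by auto
  ultimately have "0 < m" "m < 1" by auto
  then show False by simp
qed

lemma zeta_pow_mod: "0 < d \<Longrightarrow> zeta d ^ (k mod d) = zeta d ^ k"
proof -
  assume d: "0 < d"
  have "(zeta d ^ d) ^ (k div d) * zeta d ^ (k mod d) = zeta d ^ (d * (k div d) + k mod d)"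
    by (simp only: power_add power_mult)
  also have "\<dots> = zeta d ^ k" by (simp only: mult_div_mod_eq)
  finally show ?thesis using d by (simp add: zeta_pow_d)
qed

lemma zeta_inj: assumes "a < d" "b < d" "zeta d ^ a = zeta d ^ b" shows "a = b"
proof (rule ccontr)
  assume ne: "a \<noteq> b"
  { fix a b assume ab: "a < b" "b < d" "zeta d ^ a = zeta d ^ b"
    have "zeta d ^ b = zeta d ^ a * zeta d ^ (b - a)"
      by (metis ab(1) le_add_diff_inverse less_imp_le power_add)
    then have "zeta d ^ (b - a) = 1" using ab zeta_neq0 by simp
    with zeta_pow_neq1[of "b - a" d] ab have False by linarith }
  with assms ne show False by (metis linorder_neqE_nat)
qed

lemma root_sum:
  assumes "a < d" "b < d"
  shows "(\<Sum>s<d. (zeta d ^ b / zeta d ^ a) ^ s) = (if a = b then of_nat d else 0)"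
proof -
  let ?w = "zeta d ^ b / zeta d ^ a"
  have d: "0 < d" using assms by simp
  have p: "(zeta d ^ x) ^ d = 1" for x by (metis mult.commute power_mult zeta_pow_d[OF d] power_one)
  have wd: "?w ^ d = 1" by (simp add: power_divide p)
  have "?w = 1 \<longleftrightarrow> a = b" using zeta_inj[OF assms] zeta_neq0 by (auto simp: field_simps)
  then show ?thesis using wd by (auto simp: sum_gp_strict)
qed

locale ytl =
  fixes T G :: "nat \<Rightarrow> 'a::ring_1" and U :: 'a and C :: "complex \<Rightarrow> 'a" and d n :: nat
    and ee :: "nat \<Rightarrow> 'a"
  defines "ee \<equiv> \<lambda>k. C (1 / of_nat d) * (\<Sum>s\<in>{0..<d}. T k ^ s * T (k+1) ^ ((d - s) mod d))"
  assumes d_pos: "0 < d"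
  and C_add: "C (x + y) = C x + C y"
  and C_mult: "C (x * y) = C x * C y"
  and C_one: "C 1 = 1"
  and C_comm: "C x * a = a * C x"
  and TT: "\<lbrakk>1 \<le> m; m \<le> n; 1 \<le> m'; m' \<le> n\<rbrakk> \<Longrightarrow> T m * T m' = T m' * T m"
  and Tpow: "\<lbrakk>1 \<le> m; m \<le> n\<rbrakk> \<Longrightarrow> T m ^ d = 1"
  and TG: "\<lbrakk>1 \<le> k; k \<le> n - 1; 1 \<le> m; m \<le> n\<rbrakk> \<Longrightarrow> T m * G k = G k * T (transp k m)"
  and GG: "\<lbrakk>1 \<le> k; k \<le> n - 1; 1 \<le> k'; k' \<le> n - 1; k + 1 < k' \<or> k' + 1 < k\<rbrakk>
            \<Longrightarrow> G k * G k' = G k' * G k"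
  and Gsq: "\<lbrakk>1 \<le> k; k \<le> n - 1\<rbrakk> \<Longrightarrow> G k * G k = 1 + (U - 1) * ee k + (U - 1) * ee k * G k"
  and YTL: "\<lbrakk>1 \<le> k; k + 2 \<le> n\<rbrakk> \<Longrightarrow>
     G k * G (k+1) * G k + G k * G (k+1) + G (k+1) * G k + G k + G (k+1) + 1 = 0"
begin

lemma C_zero: "C 0 = 0"
  using C_add[of 0 0] by simp

lemma C_minus: "C (- x) = - C x"
proof -
  have "C x + C (- x) = 0" using C_add[of x "-x"] C_zero by simp
  then show ?thesis by (simp add: add_eq_0_iff)
qed

lemma C_diff: "C (x - y) = C x - C y"
  using C_add[of "x - y" y] by (simp add: eq_diff_eq)

lemma C_sum: "C (sum f A) = (\<Sum>x\<in>A. C (f x))"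
  by (induction A rule: infinite_finite_induct) (auto simp: C_zero C_add)

lemma C_of_nat: "C (of_nat k) = of_nat k"
  by (induction k) (auto simp: C_zero C_add C_one)

lemma C_commL: "C x * (a * b) = a * (C x * b)"
proof -
  have "C x * (a * b) = (C x * a) * b" by (simp add: mult.assoc)
  also have "\<dots> = (a * C x) * b" by (simp only: C_comm)
  finally show ?thesis by (simp add: mult.assoc)
qed

definition dl :: "nat \<Rightarrow> nat \<Rightarrow> 'a" where
  "dl m a = C (1 / of_nat d) * (\<Sum>s<d. C (inverse (zeta d ^ a) ^ s) * T m ^ s)"

lemma comm_sum:
  fixes x :: 'a
  shows "(\<And>i. i \<in> A \<Longrightarrow> x * f i = f i * x) \<Longrightarrow> x * sum f A = sum f A * x"
proof (induction A rule: infinite_finite_induct)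
  case (insert a F)
  then have "x * f a = f a * x" "x * sum f F = sum f F * x" by auto
  then show ?case using insert by (simp add: distrib_left distrib_right)
qed auto

lemma comm_pow:
  fixes x y :: 'a
  shows "x * y = y * x \<Longrightarrow> x * y ^ k = y ^ k * x"
proof (induction k)
  case (Suc k)
  have "x * y ^ Suc k = (x * y) * y ^ k" by (simp add: mult.assoc)
  also have "\<dots> = y * (x * y ^ k)" using Suc by (simp add: mult.assoc)
  also have "\<dots> = y ^ Suc k * x" using Suc by (simp add: mult.assoc)
  finally show ?case .
qed simp

lemma comm_CS:
  fixes x S :: 'a
  assumes "x * S = S * x"
  shows "x * (C c * S) = (C c * S) * x"
proof -
  have "x * (C c * S) = (x * C c) * S" by (simp add: mult.assoc)
  also have "\<dots> = (C c * x) * S" by (simp only: C_comm)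
  also have "\<dots> = C c * (S * x)" by (simp add: mult.assoc assms)
  finally show ?thesis by (simp add: mult.assoc)
qed

lemma comm_dl:
  fixes x :: 'a
  shows "x * T m = T m * x \<Longrightarrow> x * dl m a = dl m a * x"
proof -
  assume h: "x * T m = T m * x"
  have "x * (C c * T m ^ s) = (C c * T m ^ s) * x" for c s
  proof -
    have "x * (C c * T m ^ s) = (x * C c) * T m ^ s" by (simp add: mult.assoc)
    also have "\<dots> = C c * (x * T m ^ s)" by (simp add: C_comm mult.assoc)
    also have "\<dots> = C c * (T m ^ s * x)" by (simp add: comm_pow[OF h])
    finally show ?thesis by (simp add: mult.assoc)
  qed
  then have "x * (\<Sum>s<d. C (inverse (zeta d ^ a) ^ s) * T m ^ s) = (\<Sum>s<d. C (inverse (zeta d ^ a) ^ s) * T m ^ s) * x"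
    by (intro comm_sum) auto
  then show ?thesis unfolding dl_def by (rule comm_CS)
qed

lemma T_dl: "1 \<le> m \<Longrightarrow> m \<le> n \<Longrightarrow> 1 \<le> m' \<Longrightarrow> m' \<le> n \<Longrightarrow> T m' * dl m a = dl m a * T m'"
  by (rule comm_dl) (rule TT)

lemma dl_dl: "1 \<le> m \<Longrightarrow> m \<le> n \<Longrightarrow> 1 \<le> m' \<Longrightarrow> m' \<le> n \<Longrightarrow> dl m' b * dl m a = dl m a * dl m' b"
  by (rule comm_dl) (metis T_dl)

lemma eig:
  assumes m: "1 \<le> m" "m \<le> n"
  shows "T m * dl m a = C (zeta d ^ a) * dl m a"
proof -
  obtain d' where dd: "d = Suc d'" using d_pos by (cases d) auto
  let ?z = "inverse (zeta d ^ a)"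
  have zd: "?z ^ d = 1" using d_pos
  proof -
    have "(zeta d ^ a) ^ d = (zeta d ^ d) ^ a" by (simp only: power_mult[symmetric] mult.commute)
    then show ?thesis using d_pos by (simp add: power_inverse zeta_pow_d)
  qed
  have z1: "zeta d ^ a * ?z = 1" by (simp add: zeta_neq0)
  have zd': "?z ^ d' = zeta d ^ a"
  proof -
    have "?z ^ d' * ?z = 1" using zd dd by (simp add: power_Suc2 del: power_Suc)
    then have "?z ^ d' = inverse ?z" by (simp add: field_simps)
    then show ?thesis by simp
  qed
  have "T m * (\<Sum>s<d. C (?z ^ s) * T m ^ s) = (\<Sum>s<d. C (?z ^ s) * T m ^ Suc s)"
    by (simp add: sum_distrib_left C_commL[where a="T m"])
  also have "\<dots> = (\<Sum>s<d'. C (?z ^ s) * T m ^ Suc s) + C (?z ^ d') * T m ^ d"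
    by (simp add: dd)
  also have "\<dots> = (\<Sum>s<d'. C (?z ^ s) * T m ^ Suc s) + C (zeta d ^ a)"
    using Tpow[OF m] zd' by simp
  also have "\<dots> = C (zeta d ^ a) * (\<Sum>s<d. C (?z ^ s) * T m ^ s)"
  proof -
    have "C (zeta d ^ a) * (\<Sum>s<d. C (?z ^ s) * T m ^ s) = (\<Sum>s<d. C (zeta d ^ a * ?z ^ s) * T m ^ s)"
      by (simp add: sum_distrib_left C_mult mult.assoc)
    also have "\<dots> = C (zeta d ^ a * ?z ^ 0) * T m ^ 0 + (\<Sum>s<d'. C (zeta d ^ a * ?z ^ Suc s) * T m ^ Suc s)"
      unfolding dd by (rule sum.lessThan_Suc_shift)
    also have "\<dots> = C (zeta d ^ a) + (\<Sum>s<d'. C (?z ^ s) * T m ^ Suc s)"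
    proof -
      have h: "zeta d ^ a * ?z ^ Suc s = ?z ^ s" for s
      proof -
        have "zeta d ^ a * ?z ^ Suc s = (zeta d ^ a * ?z) * ?z ^ s" by (simp only: power_Suc mult.assoc)
        then show ?thesis using z1 by simp
      qed
      show ?thesis by (simp only: h power_0 mult_1_right mult_1_left)
    qed
    finally show ?thesis by (simp add: add.commute)
  qed
  finally have S: "T m * (\<Sum>s<d. C (?z ^ s) * T m ^ s) = C (zeta d ^ a) * (\<Sum>s<d. C (?z ^ s) * T m ^ s)" .
  have "T m * (C (1 / of_nat d) * (\<Sum>s<d. C (?z ^ s) * T m ^ s))
     = C (1 / of_nat d) * (C (zeta d ^ a) * (\<Sum>s<d. C (?z ^ s) * T m ^ s))"
    by (simp only: C_commL[where a="T m", symmetric] S)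
  also have "\<dots> = C (zeta d ^ a) * (C (1 / of_nat d) * (\<Sum>s<d. C (?z ^ s) * T m ^ s))"
    by (simp add: mult.assoc[symmetric] C_mult[symmetric] mult.commute)
  finally show ?thesis unfolding dl_def .
qed

lemma eig_pow:
  assumes m: "1 \<le> m" "m \<le> n"
  shows "T m ^ s * dl m a = C ((zeta d ^ a) ^ s) * dl m a"
proof (induction s)
  case 0 then show ?case by (simp add: C_one)
next
  case (Suc s)
  have "T m ^ Suc s * dl m a = T m * (T m ^ s * dl m a)" by (simp add: mult.assoc)
  also have "\<dots> = C ((zeta d ^ a) ^ s) * (T m * dl m a)" using Suc by (simp add: C_commL)
  also have "\<dots> = C ((zeta d ^ a) ^ Suc s) * dl m a" using eig[OF m]
    by (simp add: mult.assoc[symmetric] C_mult[symmetric] mult.commute)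
  finally show ?case .
qed

lemma C_commR: "a * (C x * b) = C x * (a * b)"
  by (simp only: C_commL)

lemma C_C: "C x * (C y * b) = C (x * y) * b"
  by (simp add: C_mult mult.assoc)

lemma dl_sum: "(\<Sum>a<d. dl m a) = 1"
proof -
  have key: "(\<Sum>a<d. inverse (zeta d ^ a) ^ s) = (if s = 0 then of_nat d else 0)" if s: "s < d" for s
  proof -
    have "inverse (zeta d ^ a) ^ s = (zeta d ^ 0 / zeta d ^ s) ^ a" for a
      by (simp add: power_inverse divide_inverse flip: power_mult) (simp add: mult.commute)
    then have "(\<Sum>a<d. inverse (zeta d ^ a) ^ s) = (\<Sum>a<d. (zeta d ^ 0 / zeta d ^ s) ^ a)" by simp
    also have "\<dots> = (if s = 0 then of_nat d else 0)" using root_sum[OF s d_pos] by auto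
    finally show ?thesis .
  qed
  have "(\<Sum>a<d. dl m a) = C (1 / of_nat d) * (\<Sum>a<d. \<Sum>s<d. C (inverse (zeta d ^ a) ^ s) * T m ^ s)"
    unfolding dl_def by (simp add: sum_distrib_left)
  also have "(\<Sum>a<d. \<Sum>s<d. C (inverse (zeta d ^ a) ^ s) * T m ^ s)
           = (\<Sum>s<d. C (\<Sum>a<d. inverse (zeta d ^ a) ^ s) * T m ^ s)"
    by (subst sum.swap) (simp add: C_sum sum_distrib_right)
  also have "\<dots> = (\<Sum>s<d. if s = 0 then C (of_nat d) else 0)"
    by (intro sum.cong) (auto simp: key C_zero)
  also have "\<dots> = C (of_nat d)" using d_pos by simp
  finally show ?thesis using d_pos by (simp add: C_mult[symmetric] C_one)
qed

lemma dl_idem: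
  assumes m: "1 \<le> m" "m \<le> n" and ab: "a < d" "b < d"
  shows "dl m a * dl m b = (if a = b then dl m a else 0)"
proof -
  have "dl m a * dl m b = C (1 / of_nat d) * (\<Sum>s<d. C (inverse (zeta d ^ a) ^ s) * (T m ^ s * dl m b))"
    unfolding dl_def[of m a] by (simp add: sum_distrib_right mult.assoc)
  also have "\<dots> = C (1 / of_nat d) * (\<Sum>s<d. C (inverse (zeta d ^ a) ^ s * (zeta d ^ b) ^ s) * dl m b)"
    by (simp add: eig_pow[OF m] C_C)
  also have "\<dots> = C (1 / of_nat d) * (C (\<Sum>s<d. (zeta d ^ b / zeta d ^ a) ^ s) * dl m b)"
    by (simp add: C_sum sum_distrib_right power_divide divide_inverse power_inverse mult.commute power_mult_distrib)
  also have "\<dots> = C (1 / of_nat d * (if a = b then of_nat d else 0)) * dl m b"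
    by (simp add: root_sum[OF ab] C_C)
  also have "\<dots> = (if a = b then dl m a else 0)"
    using d_pos by (simp add: C_one C_zero)
  finally show ?thesis .
qed

lemma pow_swap:
  fixes X :: 'a
  assumes "T m * X = X * T m'"
  shows "T m ^ s * X = X * T m' ^ s"
proof (induction s)
  case (Suc s)
  have "T m ^ Suc s * X = T m * (T m ^ s * X)" by (simp add: mult.assoc)
  also have "\<dots> = (T m * X) * T m' ^ s" using Suc by (simp add: mult.assoc)
  also have "\<dots> = X * T m' ^ Suc s" using assms by (simp add: mult.assoc power_Suc)
  finally show ?case .
qed simp

lemma swap_dl:
  fixes X :: 'a
  assumes "T m * X = X * T m'"
  shows "dl m a * X = X * dl m' a"
proof -
  have h: "(C c * T m ^ s) * X = X * (C c * T m' ^ s)" for c s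
  proof -
    have "(C c * T m ^ s) * X = C c * (X * T m' ^ s)" by (simp add: mult.assoc pow_swap[OF assms])
    also have "\<dots> = (C c * X) * T m' ^ s" by (simp add: mult.assoc)
    also have "\<dots> = X * (C c * T m' ^ s)" by (simp add: C_comm mult.assoc)
    finally show ?thesis .
  qed
  have "(\<Sum>s<d. C (inverse (zeta d ^ a) ^ s) * T m ^ s) * X = X * (\<Sum>s<d. C (inverse (zeta d ^ a) ^ s) * T m' ^ s)"
    by (simp add: sum_distrib_right sum_distrib_left h)
  then show ?thesis unfolding dl_def
    by (simp only: mult.assoc C_commL[where a=X])
qed

lemma transp_rng: "1 \<le> k \<Longrightarrow> k \<le> n - 1 \<Longrightarrow> 1 \<le> m \<Longrightarrow> m \<le> n \<Longrightarrow> 1 \<le> transp k m \<and> transp k m \<le> n"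
  by (auto simp: transp_def)

lemma dl_G: "1 \<le> k \<Longrightarrow> k \<le> n - 1 \<Longrightarrow> 1 \<le> m \<Longrightarrow> m \<le> n \<Longrightarrow> dl m a * G k = G k * dl (transp k m) a"
  by (rule swap_dl) (rule TG)

lemma ee_comm:
  fixes x :: 'a
  assumes "x * T k = T k * x" "x * T (k+1) = T (k+1) * x"
  shows "x * ee k = ee k * x"
proof -
  have "x * (T k ^ s * T (k+1) ^ t) = (T k ^ s * T (k+1) ^ t) * x" for s t
    using comm_pow[OF assms(1)] comm_pow[OF assms(2)] by (simp add: mult.assoc[symmetric]) (simp add: mult.assoc)
  then have "x * (\<Sum>s\<in>{0..<d}. T k ^ s * T (k+1) ^ ((d - s) mod d)) = (\<Sum>s\<in>{0..<d}. T k ^ s * T (k+1) ^ ((d - s) mod d)) * x"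
    by (intro comm_sum) auto
  then show ?thesis unfolding ee_def by (rule comm_CS)
qed

lemma e_kill:
  assumes k: "1 \<le> k" "k + 1 \<le> n" and ab: "a < d" "b < d" "a \<noteq> b"
  shows "ee k * (dl k a * dl (k+1) b) = 0"
proof -
  let ?D = "dl k a * dl (k+1) b"
  have m1: "1 \<le> k" "k \<le> n" and m2: "1 \<le> k + 1" "k + 1 \<le> n" using k by auto
  have inv: "(zeta d ^ b) ^ ((d - s) mod d) = inverse ((zeta d ^ b) ^ s)" if s: "s < d" for s
  proof -
    have p: "(zeta d ^ b) ^ d = 1" by (metis mult.commute power_mult zeta_pow_d[OF d_pos] power_one)
    have "(zeta d ^ b) ^ ((d - s) mod d) * (zeta d ^ b) ^ s = 1"
    proof (cases "s = 0")
      case True then show ?thesis by simp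
    next
      case False
      then have "(d - s) mod d = d - s" using s by simp
      then have "(zeta d ^ b) ^ ((d - s) mod d) * (zeta d ^ b) ^ s = (zeta d ^ b) ^ d"
        using s by (simp flip: power_add)
      then show ?thesis using p by simp
    qed
    then show ?thesis by (simp add: field_simps zeta_neq0)
  qed
  have trm: "T k ^ s * T (k+1) ^ t * ?D = C ((zeta d ^ a) ^ s * (zeta d ^ b) ^ t) * ?D" for s t
  proof -
    have c: "T (k+1) ^ t * dl k a = dl k a * T (k+1) ^ t"
      using comm_pow[OF T_dl[OF m1 m2, of a, symmetric], of t] by simp
    have "T k ^ s * T (k+1) ^ t * ?D = T k ^ s * ((T (k+1) ^ t * dl k a) * dl (k+1) b)"
      by (simp add: mult.assoc)
    also have "\<dots> = T k ^ s * (dl k a * (T (k+1) ^ t * dl (k+1) b))" by (subst c) (simp only: mult.assoc)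
    also have "\<dots> = C ((zeta d ^ b) ^ t) * ((T k ^ s * dl k a) * dl (k+1) b)"
      by (simp only: eig_pow[OF m2] C_commR[where a="dl k a"] C_commR[where a="T k ^ s"] mult.assoc)
    also have "\<dots> = C ((zeta d ^ b) ^ t * (zeta d ^ a) ^ s) * ?D"
      by (simp only: eig_pow[OF m1] mult.assoc C_C)
    also have "\<dots> = C ((zeta d ^ a) ^ s * (zeta d ^ b) ^ t) * ?D"
      by (simp only: mult.commute[of "(zeta d ^ b) ^ t"])
    finally show ?thesis .
  qed
  have "ee k * ?D = C (1 / of_nat d) * (\<Sum>s\<in>{0..<d}. T k ^ s * T (k+1) ^ ((d - s) mod d) * ?D)"
    unfolding ee_def by (simp add: sum_distrib_right mult.assoc)
  also have "\<dots> = C (1 / of_nat d) * (\<Sum>s\<in>{0..<d}. C ((zeta d ^ a / zeta d ^ b) ^ s) * ?D)"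
  proof (intro arg_cong[where f="\<lambda>x. C (1 / of_nat d) * x"] sum.cong refl)
    fix s assume "s \<in> {0..<d}"
    then have s: "s < d" by simp
    have "(zeta d ^ a) ^ s * (zeta d ^ b) ^ ((d - s) mod d) = (zeta d ^ a / zeta d ^ b) ^ s"
      by (simp add: inv[OF s] power_divide divide_inverse power_mult_distrib power_inverse)
    then show "T k ^ s * T (k+1) ^ ((d - s) mod d) * ?D = C ((zeta d ^ a / zeta d ^ b) ^ s) * ?D"
      by (simp only: trm)
  qed
  also have "\<dots> = C (1 / of_nat d) * (C (\<Sum>s<d. (zeta d ^ a / zeta d ^ b) ^ s) * ?D)"
    by (simp add: C_sum sum_distrib_right atLeast0LessThan)
  also have "\<dots> = 0" using root_sum[of b d a] ab by (simp add: C_zero)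
  finally show ?thesis .
qed

lemma cancel:
  fixes X :: 'a
  assumes k: "1 \<le> k" "k \<le> n - 1" and h: "G k * X = 0" "ee k * X = 0"
  shows "X = 0"
proof -
  have "G k * (G k * X) = (G k * G k) * X" by (simp only: mult.assoc)
  also have "\<dots> = X + (U - 1) * (ee k * X) + (U - 1) * (ee k * (G k * X))"
    by (simp only: Gsq[OF k] distrib_right mult.assoc mult_1_left)
  finally have "G k * (G k * X) = X + (U - 1) * (ee k * X) + (U - 1) * (ee k * (G k * X))" .
  then show ?thesis using h by simp
qed

lemma dl_G_assoc: "1 \<le> k \<Longrightarrow> k \<le> n - 1 \<Longrightarrow> 1 \<le> m \<Longrightarrow> m \<le> n \<Longrightarrow>
  dl m a * (G k * r) = G k * (dl (transp k m) a * r)"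
  by (simp add: mult.assoc[symmetric] dl_G)

lemma swap6:
  fixes a b c a' b' c' :: 'a
  assumes "c * a' = a' * c" "b * a' = a' * b" "c * b' = b' * c"
  shows "a * b * c * (a' * b' * c') = (a * a') * (b * b') * (c * c')"
proof -
  have "a * b * c * (a' * b' * c') = a * (b * ((c * a') * (b' * c')))" by (simp add: mult.assoc)
  also have "\<dots> = a * ((b * a') * (c * (b' * c')))" by (simp add: assms(1) mult.assoc)
  also have "\<dots> = a * (a' * (b * ((c * b') * c')))" by (simp add: assms(2) mult.assoc)
  also have "\<dots> = (a * a') * (b * b') * (c * c')" by (simp add: assms(3) mult.assoc)
  finally show ?thesis .
qed

definition F3 :: "nat \<Rightarrow> nat \<Rightarrow> nat \<Rightarrow> nat \<Rightarrow> 'a" where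
  "F3 k x y z = dl k x * dl (k+1) y * dl (k+2) z"

context
  fixes k :: nat
  assumes k: "1 \<le> k" "k + 2 \<le> n"
begin

lemma F3_G1: "F3 k x y z * G k = G k * F3 k y x z"
proof -
  have "F3 k x y z * G k = G k * (dl (k+1) x * (dl k y * dl (k+2) z))"
    unfolding F3_def using k by (simp add: mult.assoc dl_G dl_G_assoc transp_def)
  also have "\<dots> = G k * F3 k y x z"
    unfolding F3_def using k by (simp add: mult.assoc[symmetric] dl_dl)
  finally show ?thesis .
qed

lemma F3_G2: "F3 k x y z * G (Suc k) = G (Suc k) * F3 k x z y"
proof -
  have "F3 k x y z * G (Suc k) = G (Suc k) * (dl k x * (dl (k+2) y * dl (k+1) z))"
    unfolding F3_def using k by (simp add: mult.assoc dl_G dl_G_assoc transp_def)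
  also have "\<dots> = G (Suc k) * F3 k x z y"
    unfolding F3_def using k by (simp add: mult.assoc dl_dl)
  finally show ?thesis .
qed

lemma F3_G1_assoc: "F3 k x y z * (G k * r) = G k * (F3 k y x z * r)"
  by (simp add: mult.assoc[symmetric] F3_G1)

lemma F3_G2_assoc: "F3 k x y z * (G (Suc k) * r) = G (Suc k) * (F3 k x z y * r)"
  by (simp add: mult.assoc[symmetric] F3_G2)

lemma F3_F3:
  assumes "x < d" "y < d" "z < d" "x' < d" "y' < d" "z' < d"
  shows "F3 k x y z * F3 k x' y' z' = (if x = x' \<and> y = y' \<and> z = z' then F3 k x y z else 0)"
proof -
  have "F3 k x y z * F3 k x' y' z' = (dl k x * dl k x') * (dl (k+1) y * dl (k+1) y') * (dl (k+2) z * dl (k+2) z')"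
    unfolding F3_def using k by (intro swap6) (simp_all add: dl_dl)
  also have "\<dots> = (if x = x' \<and> y = y' \<and> z = z' then F3 k x y z else 0)"
    using k assms by (simp add: dl_idem F3_def)
  finally show ?thesis .
qed

lemma F3_F3_ne:
  assumes "x < d" "y < d" "z < d" "x' < d" "y' < d" "z' < d" "x \<noteq> x' \<or> y \<noteq> y' \<or> z \<noteq> z'"
  shows "F3 k x y z * F3 k x' y' z' = 0"
  using F3_F3[OF assms(1-6)] assms(7) by auto

lemma F3_F3_eq:
  assumes "x < d" "y < d" "z < d"
  shows "F3 k x y z * F3 k x y z = F3 k x y z"
  using F3_F3[OF assms assms] by simp

lemma F3_base:
  assumes c: "x < d" "y < d" "z < d"
  shows "F3 k x y z + (if x = y then G k * F3 k x y z else 0) + (if y = z then G (Suc k) * F3 k x y z else 0)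
    + (if x = z then G k * G (Suc k) * G k * F3 k x y z else 0)
    + (if x = y \<and> y = z then G k * G (Suc k) * F3 k x y z + G (Suc k) * G k * F3 k x y z else 0) = 0"
proof -
  let ?F = "F3 k x y z"
  have "?F * (G k * G (Suc k) * G k + G k * G (Suc k) + G (Suc k) * G k + G k + G (Suc k) + 1) * ?F = 0"
    using YTL[of k] k by simp
  then have "G k * (G (Suc k) * (G k * (F3 k z y x * ?F))) + G k * (G (Suc k) * (F3 k y z x * ?F))
    + G (Suc k) * (G k * (F3 k z x y * ?F)) + G k * (F3 k y x z * ?F) + G (Suc k) * (F3 k x z y * ?F) + ?F * ?F = 0"
    by (simp add: distrib_left distrib_right mult.assoc F3_G1_assoc F3_G2_assoc F3_G1 F3_G2)
  moreover have "F3 k z y x * ?F = (if x = z then ?F else 0)" proof (cases "x = z")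
    case True then show ?thesis using F3_F3_eq[OF c] by auto
  next
    case False then show ?thesis using F3_F3_ne[of z y x x y z] c by auto
  qed
  moreover have "F3 k y z x * ?F = (if x = y \<and> y = z then ?F else 0)" proof (cases "x = y \<and> y = z")
    case True then show ?thesis using F3_F3_eq[OF c] by auto
  next
    case False then show ?thesis using F3_F3_ne[of y z x x y z] c by auto
  qed
  moreover have "F3 k z x y * ?F = (if x = y \<and> y = z then ?F else 0)" proof (cases "x = y \<and> y = z")
    case True then show ?thesis using F3_F3_eq[OF c] by auto
  next
    case False then show ?thesis using F3_F3_ne[of z x y x y z] c by auto
  qed
  moreover have "F3 k y x z * ?F = (if x = y then ?F else 0)" proof (cases "x = y")
    case True then show ?thesis using F3_F3_eq[OF c] by auto
  next
    case False then show ?thesis using F3_F3_ne[of y x z x y z] c by auto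
  qed
  moreover have "F3 k x z y * ?F = (if y = z then ?F else 0)" proof (cases "y = z")
    case True then show ?thesis using F3_F3_eq[OF c] by auto
  next
    case False then show ?thesis using F3_F3_ne[of x z y x y z] c by auto
  qed
  moreover have "?F * ?F = ?F" using F3_F3_eq[OF c] by simp
  ultimately have h: "G k * (G (Suc k) * (G k * (if x = z then ?F else 0)))
    + G k * (G (Suc k) * (if x = y \<and> y = z then ?F else 0))
    + G (Suc k) * (G k * (if x = y \<and> y = z then ?F else 0))
    + G k * (if x = y then ?F else 0) + G (Suc k) * (if y = z then ?F else 0) + ?F = 0"
    by simp
  show ?thesis
  proof (cases "x = y")
    case True
    then show ?thesis using h by (cases "y = z") (simp_all add: mult.assoc add_ac)
  next
    case False
    then show ?thesis using h by (cases "y = z"; cases "x = z") (simp_all add: mult.assoc add_ac)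
  qed
qed

lemma baseR:
  assumes "x < d" "z < d" "x \<noteq> z"
  shows "(G k + 1) * F3 k x x z = 0"
  using F3_base[of x x z] assms by (simp add: distrib_right add.commute)

lemma baseL:
  assumes "x < d" "y < d" "x \<noteq> y"
  shows "(G (Suc k) + 1) * F3 k x y y = 0"
  using F3_base[of x y y] assms by (simp add: distrib_right add.commute)

lemma base3:
  assumes "x < d" "y < d" "z < d" "x \<noteq> y" "y \<noteq> z" "x \<noteq> z"
  shows "F3 k x y z = 0"
  using F3_base[of x y z] assms by simp

end

lemma core:
  fixes W :: 'a
  assumes m: "1 \<le> m" "Suc m \<le> n" and xy: "x < d" "y < d" "x \<noteq> y"
    and cG: "W * G m = G m * W" and cT: "W * T m = T m * W" "W * T (m+1) = T (m+1) * W"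
    and sw: "W * (dl (Suc m) x * dl m y) = 0"
  shows "W * (dl m x * dl (Suc m) y) = 0"
proof (rule cancel[of m])
  show "1 \<le> m" "m \<le> n - 1" using m by auto
  have g: "G m * (dl m x * dl (Suc m) y) = dl (Suc m) x * dl m y * G m"
  proof -
    have "dl (Suc m) x * dl m y * G m = dl (Suc m) x * (G m * dl (Suc m) y)"
      using m by (simp add: mult.assoc dl_G transp_def)
    also have "\<dots> = G m * dl m x * dl (Suc m) y"
      using m by (simp add: mult.assoc[symmetric] dl_G transp_def)
    finally show ?thesis by (simp add: mult.assoc)
  qed
  have "G m * (W * (dl m x * dl (Suc m) y)) = W * (G m * (dl m x * dl (Suc m) y))"
    by (simp add: mult.assoc[symmetric] cG)
  also have "\<dots> = W * (dl (Suc m) x * dl m y) * G m" by (simp add: g mult.assoc)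
  finally show "G m * (W * (dl m x * dl (Suc m) y)) = 0" using sw by simp
  have ce: "W * ee m = ee m * W" using ee_comm[OF cT] .
  have "ee m * (W * (dl m x * dl (Suc m) y)) = W * (ee m * (dl m x * dl (Suc m) y))"
    by (simp add: mult.assoc[symmetric] ce)
  also have "\<dots> = 0" using e_kill[of m x y] m xy by simp
  finally show "ee m * (W * (dl m x * dl (Suc m) y)) = 0" .
qed

lemma split_dl:
  fixes W :: 'a
  assumes "\<And>g. g < d \<Longrightarrow> W * dl m' g = 0"
  shows "W = 0"
proof -
  have "W = W * (\<Sum>g<d. dl m' g)" by (simp add: dl_sum)
  also have "\<dots> = 0" by (simp add: sum_distrib_left assms)
  finally show ?thesis .
qed

lemma pushR:
  fixes Z B :: 'a
  assumes k: "1 \<le> k" and c: "c < d"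
    and cT: "\<And>m. k + 2 \<le> m \<Longrightarrow> m \<le> n \<Longrightarrow> Z * T m = T m * Z \<and> B * T m = T m * B"
    and cG: "\<And>m. k + 2 \<le> m \<Longrightarrow> m \<le> n - 1 \<Longrightarrow> Z * G m = G m * Z \<and> B * G m = G m * B"
    and b0: "Z * B * dl (k+2) c = 0"
    and m: "k + 2 \<le> m" "m \<le> n"
  shows "Z * B * dl m c = 0"
  using m(1,2)
proof (induction m rule: dec_induct)
  case base then show ?case using b0 by simp
next
  case (step m)
  have mr: "1 \<le> m" "Suc m \<le> n" using step k by auto
  have cW: "Z * B * X = X * (Z * B)" if "Z * X = X * Z" "B * X = X * B" for X
    by (metis mult.assoc that)
  show ?case
  proof (rule split_dl[where m'=m])
    fix g assume g: "g < d"
    have "Z * B * dl (Suc m) c * dl m g = Z * B * (dl m g * dl (Suc m) c)"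
      using mr by (simp add: mult.assoc dl_dl)
    also have "\<dots> = 0"
    proof (cases "g = c")
      case True
      then have "Z * B * (dl m g * dl (Suc m) c) = (Z * B * dl m c) * dl (Suc m) c" by (simp add: mult.assoc)
      then show ?thesis using step by simp
    next
      case False
      show ?thesis
      proof (rule core[OF mr g c False])
        show "Z * B * G m = G m * (Z * B)" using cW cG[of m] step by auto
        show "Z * B * T m = T m * (Z * B)" using cW cT[of m] step by auto
        show "Z * B * T (m+1) = T (m+1) * (Z * B)" using cW cT[of "m+1"] step by auto
        have "Z * B * (dl (Suc m) g * dl m c) = (Z * B * dl m c) * dl (Suc m) g"
          using mr by (simp add: mult.assoc dl_dl)
        then show "Z * B * (dl (Suc m) g * dl m c) = 0" using step by simp
      qed
    qed
    finally show "Z * B * dl (Suc m) c * dl m g = 0" .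
  qed
qed

lemma pushL:
  fixes Z B :: 'a
  assumes k: "k + 1 \<le> n" "2 \<le> k" and c: "c < d"
    and cT: "\<And>m. 1 \<le> m \<Longrightarrow> m \<le> k - 1 \<Longrightarrow> Z * T m = T m * Z \<and> B * T m = T m * B"
    and cG: "\<And>m. 1 \<le> m \<Longrightarrow> m \<le> k - 2 \<Longrightarrow> Z * G m = G m * Z \<and> B * G m = G m * B"
    and b0: "Z * B * dl (k-1) c = 0"
    and m: "1 \<le> m" "m \<le> k - 1"
  shows "Z * B * dl m c = 0"
  using m(2,1)
proof (induction m rule: inc_induct)
  case base then show ?case using b0 by simp
next
  case (step m)
  have mr: "1 \<le> m" "Suc m \<le> n" using step k by auto
  have cW: "Z * B * X = X * (Z * B)" if "Z * X = X * Z" "B * X = X * B" for X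
    by (metis mult.assoc that)
  have IH: "Z * B * dl (Suc m) c = 0" using step by auto
  show ?case
  proof (rule split_dl[where m'="Suc m"])
    fix g assume g: "g < d"
    have "Z * B * dl m c * dl (Suc m) g = Z * B * (dl m c * dl (Suc m) g)"
      by (simp add: mult.assoc)
    also have "\<dots> = 0"
    proof (cases "g = c")
      case True
      then have "Z * B * (dl m c * dl (Suc m) g) = (Z * B * dl (Suc m) c) * dl m c"
        using mr by (simp add: mult.assoc dl_dl)
      then show ?thesis using IH by simp
    next
      case False
      then have cg: "c \<noteq> g" by simp
      show ?thesis
      proof (rule core[OF mr c g cg])
        show "Z * B * G m = G m * (Z * B)" using cW cG[of m] step by auto
        show "Z * B * T m = T m * (Z * B)" using cW cT[of m] step by auto
        show "Z * B * T (m+1) = T (m+1) * (Z * B)" using cW cT[of "m+1"] step by auto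
        have "Z * B * (dl (Suc m) c * dl m g) = (Z * B * dl (Suc m) c) * dl m g"
          by (simp add: mult.assoc)
        then show "Z * B * (dl (Suc m) c * dl m g) = 0" using IH by simp
      qed
    qed
    finally show "Z * B * dl m c * dl (Suc m) g = 0" .
  qed
qed

definition tmA :: "(nat \<Rightarrow> nat) \<Rightarrow> 'a" where
  "tmA r = prod_list (map (\<lambda>m. T m ^ r m) [1..<n+1])"

definition gikA :: "(nat \<times> nat) list \<Rightarrow> 'a" where
  "gikA p = prod_list (map (\<lambda>(i,k). prod_list (map (\<lambda>m. G (i - m)) [0..<k+1])) p)"

inductive_set Ls :: "'a set" where
  Ls0: "0 \<in> Ls"
| LsB: "r \<in> exps d n \<Longrightarrow> p \<in> Tn n \<Longrightarrow> gdeg p < 2 \<Longrightarrow> tmA r * gikA p \<in> Ls"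
| LsA: "a \<in> Ls \<Longrightarrow> b \<in> Ls \<Longrightarrow> a + b \<in> Ls"
| LsC: "a \<in> Ls \<Longrightarrow> C c * a \<in> Ls"

inductive_set Tp :: "'a set" where
  TpB: "r \<in> exps d n \<Longrightarrow> tmA r \<in> Tp"
| Tp0: "0 \<in> Tp"
| TpA: "a \<in> Tp \<Longrightarrow> b \<in> Tp \<Longrightarrow> a + b \<in> Tp"
| TpC: "a \<in> Tp \<Longrightarrow> C c * a \<in> Tp"

lemma comm_prod_list:
  fixes a :: 'a
  shows "(\<And>x. x \<in> set xs \<Longrightarrow> a * x = x * a) \<Longrightarrow> a * prod_list xs = prod_list xs * a"
proof (induction xs)
  case (Cons x xs)
  then have "a * x = x * a" "a * prod_list xs = prod_list xs * a" by auto
  then show ?case by (simp add: mult.assoc[symmetric]) (simp add: mult.assoc)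
qed simp

lemma tmA_T:
  assumes r: "r \<in> exps d n" and m: "1 \<le> m" "m \<le> n"
  shows "tmA r * T m = tmA (r(m := (r m + 1) mod d))"
proof -
  let ?r' = "r(m := (r m + 1) mod d)"
  have ups: "[1..<n+1] = [1..<m] @ m # [Suc m..<n+1]"
    using m upt_add_eq_append[of 1 m "n + 1 - m"] upt_conv_Cons[of m "n+1"] by simp
  let ?P1 = "prod_list (map (\<lambda>j. T j ^ r j) [1..<m])"
  let ?P2 = "prod_list (map (\<lambda>j. T j ^ r j) [Suc m..<n+1])"
  have P1: "prod_list (map (\<lambda>j. T j ^ ?r' j) [1..<m]) = ?P1"
    by (intro arg_cong[where f=prod_list] map_cong) auto
  have P2: "prod_list (map (\<lambda>j. T j ^ ?r' j) [Suc m..<n+1]) = ?P2"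
    by (intro arg_cong[where f=prod_list] map_cong) auto
  have c2: "T m * ?P2 = ?P2 * T m"
    using m by (intro comm_prod_list) (auto intro!: comm_pow TT)
  have pw: "T m ^ r m * T m = T m ^ ((r m + 1) mod d)"
  proof -
    have "r m < d" using r m by (auto simp: exps_def)
    then show ?thesis
    proof (cases "r m + 1 = d")
      case True then show ?thesis using Tpow[OF m] by (simp add: power_Suc2[symmetric])
    next
      case False then show ?thesis using \<open>r m < d\<close> by (simp add: power_Suc2[symmetric])
    qed
  qed
  have t: "tmA r = ?P1 * (T m ^ r m * ?P2)"
    unfolding tmA_def ups by (simp only: map_append list.map prod_list.append prod_list.Cons)
  have "tmA r * T m = ?P1 * (T m ^ r m * (?P2 * T m))" by (simp only: t mult.assoc)
  also have "\<dots> = ?P1 * ((T m ^ r m * T m) * ?P2)" by (simp only: c2[symmetric] mult.assoc)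
  also have "\<dots> = ?P1 * (T m ^ ((r m + 1) mod d) * ?P2)" by (simp only: pw)
  also have "\<dots> = tmA ?r'"
    unfolding tmA_def ups by (simp only: map_append list.map prod_list.append prod_list.Cons P1 P2 fun_upd_same)
  finally show ?thesis .
qed

lemma exps_upd: "r \<in> exps d n \<Longrightarrow> 1 \<le> m \<Longrightarrow> m \<le> n \<Longrightarrow> r(m := (r m + 1) mod d) \<in> exps d n"
  using d_pos by (auto simp: exps_def)

lemma Tp_T: "x \<in> Tp \<Longrightarrow> 1 \<le> m \<Longrightarrow> m \<le> n \<Longrightarrow> x * T m \<in> Tp"
proof (induction x rule: Tp.induct)
  case (TpB r)
  have "tmA r * T m = tmA (r(m := (r m + 1) mod d))" by (rule tmA_T) (use TpB in auto)
  moreover have "tmA (r(m := (r m + 1) mod d)) \<in> Tp" by (rule Tp.TpB, rule exps_upd) (use TpB in auto)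
  ultimately show ?case by simp
next
  case Tp0 then show ?case by (simp add: Tp.Tp0)
next
  case (TpA a b) then show ?case by (simp add: distrib_right Tp.TpA)
next
  case (TpC a c) then show ?case by (simp add: mult.assoc Tp.TpC)
qed

lemma Tp_pow: "x \<in> Tp \<Longrightarrow> 1 \<le> m \<Longrightarrow> m \<le> n \<Longrightarrow> x * T m ^ s \<in> Tp"
proof (induction s)
  case 0 then show ?case by simp
next
  case (Suc s)
  then have "x * T m ^ s * T m \<in> Tp" by (simp add: Tp_T)
  then show ?case by (simp only: power_Suc2 mult.assoc)
qed

lemma Tp_sum: "finite A \<Longrightarrow> (\<And>i. i \<in> A \<Longrightarrow> f i \<in> Tp) \<Longrightarrow> sum f A \<in> Tp"
  by (induction A rule: finite_induct) (auto intro: Tp.intros)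

lemma Ls_sum: "finite A \<Longrightarrow> (\<And>i. i \<in> A \<Longrightarrow> f i \<in> Ls) \<Longrightarrow> sum f A \<in> Ls"
  by (induction A rule: finite_induct) (auto intro: Ls.intros)

lemma Tp_dl: "x \<in> Tp \<Longrightarrow> 1 \<le> m \<Longrightarrow> m \<le> n \<Longrightarrow> x * dl m a \<in> Tp"
proof -
  assume x: "x \<in> Tp" and m: "1 \<le> m" "m \<le> n"
  have "x * dl m a = C (1 / of_nat d) * (\<Sum>s<d. C (inverse (zeta d ^ a) ^ s) * (x * T m ^ s))"
    unfolding dl_def by (simp add: sum_distrib_left C_commR[where a=x])
  also have "\<dots> \<in> Tp" using x m by (intro Tp.TpC Tp_sum Tp_pow) auto
  finally show ?thesis .
qed

lemma zero_exps: "(\<lambda>_. 0) \<in> exps d n" using d_pos by (simp add: exps_def)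

lemma tmA_zero: "tmA (\<lambda>_. 0) = 1"
  unfolding tmA_def by (induction n) auto

lemma Tp_one: "1 \<in> Tp" using Tp.TpB[OF zero_exps] by (simp add: tmA_zero)

lemma Tp_Ls: "x \<in> Tp \<Longrightarrow> x \<in> Ls"
proof (induction x rule: Tp.induct)
  case (TpB r)
  have "[] \<in> Tn n" by (simp add: Tn_def)
  then have "tmA r * gikA [] \<in> Ls" using TpB by (intro Ls.LsB) (auto simp: gdeg_def)
  then show ?case by (simp add: gikA_def)
qed (auto intro: Ls.intros)

lemma Tp_G: "x \<in> Tp \<Longrightarrow> 1 \<le> k \<Longrightarrow> k \<le> n - 1 \<Longrightarrow> x * G k \<in> Ls"
proof (induction x rule: Tp.induct)
  case (TpB r)
  have "[(k, 0)] \<in> Tn n" using TpB by (auto simp: Tn_def)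
  then have "tmA r * gikA [(k,0)] \<in> Ls" using TpB by (intro Ls.LsB) (auto simp: gdeg_def)
  then show ?case by (simp add: gikA_def)
next
  case Tp0 then show ?case by (simp add: Ls.Ls0)
next
  case (TpA a b) then show ?case by (simp add: distrib_right Ls.LsA)
next
  case (TpC a c) then show ?case by (simp add: mult.assoc Ls.LsC)
qed

lemma dl_dl_assoc: "1 \<le> m \<Longrightarrow> m \<le> n \<Longrightarrow> 1 \<le> m' \<Longrightarrow> m' \<le> n \<Longrightarrow>
   dl m' b * (dl m a * r) = dl m a * (dl m' b * r)"
  by (simp add: mult.assoc[symmetric] dl_dl)

lemma T_dl_assoc: "1 \<le> m \<Longrightarrow> m \<le> n \<Longrightarrow> 1 \<le> m' \<Longrightarrow> m' \<le> n \<Longrightarrow>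
   T m' * (dl m a * r) = dl m a * (T m' * r)"
  by (simp add: mult.assoc[symmetric] T_dl)

lemma GT_far: "1 \<le> k \<Longrightarrow> k \<le> n - 1 \<Longrightarrow> 1 \<le> m \<Longrightarrow> m \<le> n \<Longrightarrow> m \<noteq> k \<Longrightarrow> m \<noteq> k + 1 \<Longrightarrow>
   G k * T m = T m * G k"
  using TG[of k m] by (simp add: transp_def)

lemma Tp_prod4: "1 \<le> m1 \<Longrightarrow> m1 \<le> n \<Longrightarrow> 1 \<le> m2 \<Longrightarrow> m2 \<le> n \<Longrightarrow> 1 \<le> m3 \<Longrightarrow> m3 \<le> n \<Longrightarrow> 1 \<le> m4 \<Longrightarrow> m4 \<le> n \<Longrightarrow>
  dl m1 a * (dl m2 b * (dl m3 c * dl m4 e)) \<in> Tp"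
proof -
  assume h: "1 \<le> m1" "m1 \<le> n" "1 \<le> m2" "m2 \<le> n" "1 \<le> m3" "m3 \<le> n" "1 \<le> m4" "m4 \<le> n"
  have "1 * dl m1 a * dl m2 b * dl m3 c * dl m4 e \<in> Tp"
    using h by (intro Tp_dl Tp_one) auto
  then show ?thesis by (simp add: mult.assoc)
qed

context
  fixes i j :: nat
  assumes ij: "1 \<le> i" "i + 1 < j" "j + 1 \<le> n"
begin

abbreviation "Dl a b c e \<equiv> dl i a * (dl (Suc i) b * (dl j c * dl (Suc j) e))"

lemma Dl_Tp: "Dl a b c e \<in> Tp"
  using ij by (intro Tp_prod4) auto

lemma X_Dl:
  "(T i + T (Suc i) - T j - T (Suc j)) * Dl a b c e
     = C (zeta d ^ a + zeta d ^ b - zeta d ^ c - zeta d ^ e) * Dl a b c e"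
proof -
  have r: "1 \<le> i" "i \<le> n" "1 \<le> Suc i" "Suc i \<le> n" "1 \<le> j" "j \<le> n" "1 \<le> Suc j" "Suc j \<le> n"
    using ij by auto
  have e1: "T i * Dl a b c e = C (zeta d ^ a) * Dl a b c e"
    by (simp add: mult.assoc[symmetric] eig[OF r(1,2)])
  have e2: "T (Suc i) * Dl a b c e = C (zeta d ^ b) * Dl a b c e"
  proof -
    have "T (Suc i) * Dl a b c e = dl i a * (T (Suc i) * (dl (Suc i) b * (dl j c * dl (Suc j) e)))"
      by (simp only: mult.assoc[symmetric] T_dl[OF r(1,2) r(3,4)])
    also have "\<dots> = C (zeta d ^ b) * Dl a b c e"
      by (simp add: mult.assoc[symmetric] eig[OF r(3,4)]) (simp add: mult.assoc C_commR[where a="dl i a"])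
    finally show ?thesis .
  qed
  have e3: "T j * Dl a b c e = C (zeta d ^ c) * Dl a b c e"
  proof -
    have "T j * Dl a b c e = dl i a * (dl (Suc i) b * (T j * (dl j c * dl (Suc j) e)))"
      by (simp only: T_dl_assoc[OF r(1,2) r(5,6)] T_dl_assoc[OF r(3,4) r(5,6)])
    also have "\<dots> = C (zeta d ^ c) * Dl a b c e"
      by (simp add: mult.assoc[symmetric] eig[OF r(5,6)])
         (simp add: mult.assoc C_commR[where a="dl i a"] C_commR[where a="dl (Suc i) b"])
    finally show ?thesis .
  qed
  have e4: "T (Suc j) * Dl a b c e = C (zeta d ^ e) * Dl a b c e"
  proof -
    have "T (Suc j) * Dl a b c e = dl i a * (dl (Suc i) b * (dl j c * (T (Suc j) * dl (Suc j) e)))"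
      by (simp only: T_dl_assoc[OF r(1,2) r(7,8)] T_dl_assoc[OF r(3,4) r(7,8)] T_dl_assoc[OF r(5,6) r(7,8)])
    also have "\<dots> = C (zeta d ^ e) * Dl a b c e"
      by (simp add: eig[OF r(7,8)] C_commR[where a="dl i a"] C_commR[where a="dl (Suc i) b"]
          C_commR[where a="dl j c"])
    finally show ?thesis .
  qed
  have "(T i + T (Suc i) - T j - T (Suc j)) * Dl a b c e
     = T i * Dl a b c e + T (Suc i) * Dl a b c e - T j * Dl a b c e - T (Suc j) * Dl a b c e"
    by (simp only: distrib_right left_diff_distrib)
  also have "\<dots> = C (zeta d ^ a) * Dl a b c e + C (zeta d ^ b) * Dl a b c e
      - C (zeta d ^ c) * Dl a b c e - C (zeta d ^ e) * Dl a b c e"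
    by (simp only: e1 e2 e3 e4)
  also have "\<dots> = C (zeta d ^ a + zeta d ^ b - zeta d ^ c - zeta d ^ e) * Dl a b c e"
    by (simp only: C_add C_diff distrib_right left_diff_distrib)
  finally show ?thesis .
qed

lemma rngs: "1 \<le> i" "i \<le> n" "1 \<le> Suc i" "Suc i \<le> n" "1 \<le> j" "j \<le> n" "1 \<le> Suc j" "Suc j \<le> n"
  "i \<le> n - 1" "j \<le> n - 1" "Suc i \<le> n - 1"
  using ij by auto

lemma caseR:
  assumes a: "a < d" "c < d" "e < d" and w: "w < d" "w \<noteq> a"
    and mw: "(m = j \<and> w = c) \<or> (m = Suc j \<and> w = e)"
  shows "C q * (Dl a a c e * (G i * G j)) \<in> Ls"
proof -
  note r = rngs
  have m: "i + 2 \<le> m" "m \<le> n" "1 \<le> m" using mw ij by auto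
  have P: "(G i + 1) * (dl i a * dl (i+1) a) * dl m w = 0"
  proof (rule pushR[of i w])
    show "1 \<le> i" "w < d" using ij w by auto
    show "i + 2 \<le> m" "m \<le> n" using m by auto
    fix m' :: nat assume m': "i + 2 \<le> m'"
    { assume "m' \<le> n"
      then have "G i * T m' = T m' * G i" using m' r by (intro GT_far) auto
      then show "(G i + 1) * T m' = T m' * (G i + 1) \<and> dl i a * dl (i+1) a * T m' = T m' * (dl i a * dl (i+1) a)"
        using m' r \<open>m' \<le> n\<close> by (simp add: distrib_left distrib_right mult.assoc T_dl T_dl_assoc) }
    { assume "m' \<le> n - 1"
      then have "G i * G m' = G m' * G i" using m' r by (intro GG) auto
      then show "(G i + 1) * G m' = G m' * (G i + 1) \<and> dl i a * dl (i+1) a * G m' = G m' * (dl i a * dl (i+1) a)"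
        using m' r \<open>m' \<le> n - 1\<close> by (simp add: distrib_left distrib_right mult.assoc dl_G dl_G_assoc transp_def) }
  next
    have "(G i + 1) * F3 i a a w = 0" using baseR[of i a w] ij a w by auto
    then show "(G i + 1) * (dl i a * dl (i+1) a) * dl (i+2) w = 0" by (simp add: F3_def mult.assoc)
  qed
  have Z: "(G i + 1) * Dl a a c e = 0"
    using mw
  proof
    assume h: "m = j \<and> w = c"
    have "(G i + 1) * Dl a a c e = ((G i + 1) * (dl i a * dl (i+1) a) * dl m w) * dl (Suc j) e"
      using h by (simp add: mult.assoc)
    then show ?thesis using P by simp
  next
    assume h: "m = Suc j \<and> w = e"
    have "(G i + 1) * Dl a a c e = ((G i + 1) * (dl i a * dl (i+1) a) * dl m w) * dl j c"
      using h r by (simp add: mult.assoc dl_dl)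
    then show ?thesis using P by simp
  qed
  have cm: "Dl a a c e * G i = G i * Dl a a c e"
    using r ij by (simp add: mult.assoc dl_G dl_G_assoc transp_def dl_dl_assoc dl_dl)
  have gD: "G i * Dl a a c e = - Dl a a c e"
    using Z by (simp add: distrib_right eq_neg_iff_add_eq_0)
  have "C q * (Dl a a c e * (G i * G j)) = C q * ((Dl a a c e * G i) * G j)"
    by (simp only: mult.assoc)
  also have "\<dots> = C q * ((- Dl a a c e) * G j)" by (simp only: cm gD)
  also have "\<dots> = C (- q) * (Dl a a c e * G j)" by (simp add: C_minus)
  finally have "C q * (Dl a a c e * (G i * G j)) = C (- q) * (Dl a a c e * G j)" .
  also have "\<dots> \<in> Ls" using Dl_Tp r by (intro Ls.LsC Tp_G) auto
  finally show ?thesis .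
qed

lemma caseL:
  assumes a: "a < d" "b < d" "c < d" and w: "w < d" "w \<noteq> c"
    and mw: "(m = i \<and> w = a) \<or> (m = Suc i \<and> w = b)"
  shows "C q * (Dl a b c c * (G i * G j)) \<in> Ls"
proof -
  note r = rngs
  have m: "1 \<le> m" "m \<le> j - 1" using mw ij by auto
  have j2: "2 \<le> j" using ij by auto
  have P: "(G j + 1) * (dl j c * dl (Suc j) c) * dl m w = 0"
  proof (rule pushL[of j w])
    show "j + 1 \<le> n" "2 \<le> j" "w < d" using ij w by auto
    show "1 \<le> m" "m \<le> j - 1" using m by auto
    fix m' :: nat assume m': "1 \<le> m'"
    { assume "m' \<le> j - 1"
      then have "G j * T m' = T m' * G j" using m' r by (intro GT_far) auto
      then show "(G j + 1) * T m' = T m' * (G j + 1) \<and> dl j c * dl (Suc j) c * T m' = T m' * (dl j c * dl (Suc j) c)"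
        using m' r \<open>m' \<le> j - 1\<close> by (simp add: distrib_left distrib_right mult.assoc T_dl T_dl_assoc) }
    { assume "m' \<le> j - 2"
      then have "G j * G m' = G m' * G j" using m' r by (intro GG) auto
      moreover have "j \<noteq> Suc m'" "j \<noteq> m'" "Suc j \<noteq> m'" "Suc m' \<noteq> j" "m' \<noteq> j" "m' \<noteq> Suc j"
        using \<open>m' \<le> j - 2\<close> j2 by auto
      ultimately show "(G j + 1) * G m' = G m' * (G j + 1) \<and> dl j c * dl (Suc j) c * G m' = G m' * (dl j c * dl (Suc j) c)"
        using m' r \<open>m' \<le> j - 2\<close> j2 by (simp add: distrib_left distrib_right mult.assoc dl_G dl_G_assoc transp_def) }
  next
    have "(G (Suc (j - 1)) + 1) * F3 (j - 1) w c c = 0" using baseL[of "j - 1" w c] ij a w by auto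
    moreover have "F3 (j - 1) w c c = dl j c * dl (Suc j) c * dl (j - 1) w"
      using j2 r by (simp add: F3_def mult.assoc dl_dl dl_dl_assoc numeral_2_eq_2)
    ultimately show "(G j + 1) * (dl j c * dl (Suc j) c) * dl (j - 1) w = 0"
      using j2 by (simp add: mult.assoc)
  qed
  have Z: "(G j + 1) * Dl a b c c = 0"
    using mw
  proof
    assume h: "m = i \<and> w = a"
    have "(G j + 1) * Dl a b c c = ((G j + 1) * (dl j c * dl (Suc j) c) * dl m w) * dl (Suc i) b"
      using h r by (simp add: mult.assoc dl_dl dl_dl_assoc)
    then show ?thesis using P by simp
  next
    assume h: "m = Suc i \<and> w = b"
    have "(G j + 1) * Dl a b c c = ((G j + 1) * (dl j c * dl (Suc j) c) * dl m w) * dl i a"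
      using h r by (simp add: mult.assoc dl_dl dl_dl_assoc)
    then show ?thesis using P by simp
  qed
  have cm: "Dl a b c c * G j = G j * Dl a b c c"
    using r ij by (simp add: mult.assoc dl_G dl_G_assoc transp_def dl_dl_assoc dl_dl)
  have gD: "G j * Dl a b c c = - Dl a b c c"
    using Z by (simp add: distrib_right eq_neg_iff_add_eq_0)
  have gg: "G i * G j = G j * G i" using r ij by (intro GG) auto
  have "C q * (Dl a b c c * (G i * G j)) = C q * ((Dl a b c c * G j) * G i)"
    by (simp only: gg mult.assoc)
  also have "\<dots> = C q * ((- Dl a b c c) * G i)" by (simp only: cm gD)
  also have "\<dots> = C (- q) * (Dl a b c c * G i)" by (simp add: C_minus)
  also have "\<dots> \<in> Ls" using Dl_Tp r by (intro Ls.LsC Tp_G) auto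
  finally show ?thesis .
qed

lemma case3:
  assumes a: "a < d" "b < d" "c < d" "e < d" "a \<noteq> b" and w: "w < d" "w \<noteq> a" "w \<noteq> b"
    and mw: "(m = j \<and> w = c) \<or> (m = Suc j \<and> w = e)"
  shows "C q * (Dl a b c e * (G i * G j)) \<in> Ls"
proof -
  note r = rngs
  have m: "i + 2 \<le> m" "m \<le> n" using mw ij by auto
  have P: "1 * (dl i a * dl (i+1) b) * dl m w = 0"
  proof (rule pushR[of i w])
    show "1 \<le> i" "w < d" using ij w by auto
    show "i + 2 \<le> m" "m \<le> n" using m by auto
    fix m' :: nat assume m': "i + 2 \<le> m'"
    { assume "m' \<le> n"
      then show "1 * T m' = T m' * 1 \<and> dl i a * dl (i+1) b * T m' = T m' * (dl i a * dl (i+1) b)"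
        using m' r by (simp add: mult.assoc T_dl T_dl_assoc) }
    { assume "m' \<le> n - 1"
      then show "1 * G m' = G m' * 1 \<and> dl i a * dl (i+1) b * G m' = G m' * (dl i a * dl (i+1) b)"
        using m' r by (simp add: mult.assoc dl_G dl_G_assoc transp_def) }
  next
    have "F3 i a b w = 0" using base3[of i a b w] ij a w by auto
    then show "1 * (dl i a * dl (i+1) b) * dl (i+2) w = 0" by (simp add: F3_def mult.assoc)
  qed
  have Z: "Dl a b c e = 0"
    using mw
  proof
    assume h: "m = j \<and> w = c"
    have "Dl a b c e = (1 * (dl i a * dl (i+1) b) * dl m w) * dl (Suc j) e"
      using h by (simp add: mult.assoc)
    then show ?thesis using P by simp
  next
    assume h: "m = Suc j \<and> w = e"
    have "Dl a b c e = (1 * (dl i a * dl (i+1) b) * dl m w) * dl j c"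
      using h r by (simp add: mult.assoc dl_dl)
    then show ?thesis using P by simp
  qed
  then show ?thesis by (simp add: Ls.Ls0)
qed

lemma term_Ls:
  assumes a: "a < d" "b < d" "c < d" "e < d"
  shows "C (zeta d ^ a + zeta d ^ b - zeta d ^ c - zeta d ^ e) * (Dl a b c e * (G i * G j)) \<in> Ls"
  (is "C ?p * _ \<in> Ls")
proof (cases "?p = 0")
  case True then show ?thesis by (simp add: C_zero Ls.Ls0)
next
  case p: False
  show ?thesis
  proof (cases "a = b")
    case True
    show ?thesis
    proof (cases "c = a")
      case False then show ?thesis using caseR[of a c e c j] a \<open>a = b\<close> by auto
    next
      case ca: True
      then have "e \<noteq> a" using p \<open>a = b\<close> by auto
      then show ?thesis using caseR[of a c e e "Suc j"] a \<open>a = b\<close> by auto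
    qed
  next
    case ab: False
    show ?thesis
    proof (cases "c = e")
      case True
      show ?thesis
      proof (cases "a = c")
        case False then show ?thesis using caseL[of a b c a i] a \<open>c = e\<close> by auto
      next
        case True
        then have "b \<noteq> c" using ab by auto
        then show ?thesis using caseL[of a b c b "Suc i"] a \<open>c = e\<close> by auto
      qed
    next
      case ce: False
      show ?thesis
      proof (cases "c \<noteq> a \<and> c \<noteq> b")
        case True then show ?thesis using case3[of a b c e c j] a ab by auto
      next
        case False
        show ?thesis
        proof (cases "e \<noteq> a \<and> e \<noteq> b")
          case True then show ?thesis using case3[of a b c e e "Suc j"] a ab by auto
        next
          case False
          with \<open>\<not> (c \<noteq> a \<and> c \<noteq> b)\<close> ce have "(c = a \<and> e = b) \<or> (c = b \<and> e = a)" by auto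
          then have "?p = 0" by auto
          with p show ?thesis by simp
        qed
      qed
    qed
  qed
qed

lemma main_loc: "(T i + T (Suc i) - T j - T (Suc j)) * (G i * G j) \<in> Ls"
proof -
  let ?X = "T i + T (Suc i) - T j - T (Suc j)"
  let ?Y = "G i * G j"
  have "?X * ?Y = ?X * ((\<Sum>a<d. dl i a) * ((\<Sum>b<d. dl (Suc i) b) * ((\<Sum>c<d. dl j c) * (\<Sum>e<d. dl (Suc j) e))) * ?Y)"
    by (simp add: dl_sum)
  also have "\<dots> = (\<Sum>e<d. \<Sum>c<d. \<Sum>b<d. \<Sum>a<d. (?X * Dl a b c e) * ?Y)"
    by (simp add: sum_distrib_left sum_distrib_right mult.assoc)
  also have "\<dots> = (\<Sum>e<d. \<Sum>c<d. \<Sum>b<d. \<Sum>a<d.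
      C (zeta d ^ a + zeta d ^ b - zeta d ^ c - zeta d ^ e) * (Dl a b c e * ?Y))"
    by (simp only: X_Dl mult.assoc)
  also have "\<dots> \<in> Ls"
    by (intro Ls_sum term_Ls) auto
  finally show ?thesis .
qed

end

end




lemma fR_fA: "fpoly f \<Longrightarrow> fR (fA f) = f"
  by (simp add: fA_inverse)
lemma fR_one: "fR 1 = fone" by transfer simp
lemma fR_neg: "fR (- x) = fscale (-1) (fR x)" by transfer simp
lemma fR_pow: "fR (x ^ k) = fpow (fR x) k"
  by (induction k) (simp_all add: fpow_def fprod_def fR_one fR_mult)
lemma fR_prod_list: "fR (prod_list xs) = fprod (map fR xs)"
  by (induction xs) (simp_all add: fprod_def fR_one fR_mult)
lemma fR_sum: "fR (sum f S) = fsumset S (\<lambda>s. fR (f s))"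
proof (induction S rule: infinite_finite_induct)
  case (infinite A) then show ?case by (simp add: fR_zero fsumset_def fzero_def)
next
  case empty then show ?case by (simp add: fR_zero fsumset_def fzero_def)
next
  case (insert x F) then show ?case by (simp add: fR_add fsumset_def fadd_def)
qed

lemma fun_pow_apply: "(f ^ k) x = (f x) ^ k"
  for f :: "'b \<Rightarrow> 'c::monoid_mult"
  by (induction k) simp_all
lemma fun_prod_list_apply: "(prod_list fs) x = prod_list (map (\<lambda>f. f x) fs)"
  for fs :: "('b \<Rightarrow> 'c::monoid_mult) list"
  by (induction fs) simp_all
lemma fun_sum_apply: "(sum F S) x = sum (\<lambda>s. F s x) S"
  for F :: "'d \<Rightarrow> 'b \<Rightarrow> 'c::comm_monoid_add"
  by (induction S rule: infinite_finite_induct) simp_all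

lemma abs_pow: "abs_yq F ^ k = abs_yq (F ^ k)"
  by (induction k) (simp_all only: power_0 power_Suc one_yq.abs_eq times_yq.abs_eq)
lemma abs_prod_list: "prod_list (map (\<lambda>x. abs_yq (f x)) xs) = abs_yq (prod_list (map f xs))"
  by (induction xs) (simp_all only: list.map prod_list.Nil prod_list.Cons one_yq.abs_eq times_yq.abs_eq)
lemma abs_sum: "sum (\<lambda>x. abs_yq (f x)) S = abs_yq (sum f S)"
proof (induction S rule: infinite_finite_induct)
  case (infinite A) then show ?case by (simp only: sum.infinite[OF infinite] zero_yq.abs_eq)
next
  case empty then show ?case by (simp only: sum.empty zero_yq.abs_eq)
next
  case (insert x F) then show ?case by (simp only: sum.insert[OF insert(1,2)] insert(3) plus_yq.abs_eq)
qed

lemma abs_eqI: "(\<And>p. fR (A p - B p) \<in> Iof p) \<Longrightarrow> abs_yq A = abs_yq B"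
  by (simp add: yq.abs_eq_iff yrel_def)

lemma Iof_some: "Iof (Some (d, n)) = fideal (ytl_rels d n)" by (simp add: Iof_def)

lemma fR_zero_Iof: "x = 0 \<Longrightarrow> fR x \<in> Iof p" by (simp add: fR_zero Iof_zero)
lemma fR_eq0: "fR x = fzero \<Longrightarrow> x = 0" by (metis fR_inject fR_zero)

lemma fadd_assoc: "fadd (fadd a b) c = fadd a (fadd b c)" by (auto simp: fadd_def)

lemma fpoly_pow: "fpoly f \<Longrightarrow> fpoly (fpow f k)"
  by (induction k) (auto simp: fpow_def fprod_def intro: fpoly.intros)


lemma rel_TT: "1 \<le> m \<Longrightarrow> m \<le> n \<Longrightarrow> 1 \<le> m' \<Longrightarrow> m' \<le> n \<Longrightarrow>
  fsub (fmul (tt m) (tt m')) (fmul (tt m') (tt m)) \<in> ytl_rels d n"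
  unfolding ytl_rels_def
  apply (rule UnI1, rule UnI1, rule UnI1, rule UnI1, rule UnI2)
  by blast

lemma rel_TG: "1 \<le> k \<Longrightarrow> k \<le> n - 1 \<Longrightarrow> 1 \<le> m \<Longrightarrow> m \<le> n \<Longrightarrow>
  fsub (fmul (tt m) (gg k)) (fmul (gg k) (tt (Defs.transp k m))) \<in> ytl_rels d n"
  unfolding ytl_rels_def
  apply (rule UnI1, rule UnI1, rule UnI1, rule UnI2)
  by blast

lemma rel_Tpow: "1 \<le> m \<Longrightarrow> m \<le> n \<Longrightarrow> fsub (fpow (tt m) d) fone \<in> ytl_rels d n"
  unfolding ytl_rels_def
  apply (rule UnI1, rule UnI1, rule UnI2)
  by blast

lemma rel_GG: "1 \<le> k \<Longrightarrow> k \<le> n - 1 \<Longrightarrow> 1 \<le> k' \<Longrightarrow> k' \<le> n - 1 \<Longrightarrow> k + 1 < k' \<or> k' + 1 < k \<Longrightarrow>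
  fsub (fmul (gg k) (gg k')) (fmul (gg k') (gg k)) \<in> ytl_rels d n"
  unfolding ytl_rels_def
  apply (rule UnI1, rule UnI1, rule UnI1, rule UnI1, rule UnI1, rule UnI1, rule UnI2)
  by blast

lemma rel_Gsq: "1 \<le> k \<Longrightarrow> k \<le> n - 1 \<Longrightarrow>
  fsub (fmul (gg k) (gg k))
          (fadd fone (fadd (fmul (fsub uu fone) (ee d k))
                           (fmul (fmul (fsub uu fone) (ee d k)) (gg k)))) \<in> ytl_rels d n"
  unfolding ytl_rels_def
  apply (rule UnI1, rule UnI2)
  by blast

lemma rel_YTL: "1 \<le> k \<Longrightarrow> k + 2 \<le> n \<Longrightarrow>
  fsumset {0..<6::nat} (\<lambda>q. [fprod [gg k, gg (k+1), gg k], fmul (gg k) (gg (k+1)),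
          fmul (gg (k+1)) (gg k), gg k, gg (k+1), fone] ! q) \<in> ytl_rels d n"
  unfolding ytl_rels_def
  apply (rule UnI2)
  by blast

lemma ytl_elem_eq:
  "fsumset {0..<6::nat} (\<lambda>q. [fprod [a, b, a], fmul a b, fmul b a, a, b, fone] ! q)
   = fadd (fadd (fadd (fadd (fadd (fmul (fmul a b) a) (fmul a b)) (fmul b a)) a) b) fone"
  by (rule ext) (simp add: fsumset_def fadd_def fprod_def fmul_assoc fmul_one_right numeral_eq_Suc)

definition famT :: "nat \<Rightarrow> nat \<Rightarrow> nat \<Rightarrow> (nat \<times> nat) option \<Rightarrow> fpt" where
  "famT d n m = (\<lambda>p. if p = Some (d, n) then fA (tt m) else 1)"
definition famG :: "nat \<Rightarrow> nat \<Rightarrow> nat \<Rightarrow> (nat \<times> nat) option \<Rightarrow> fpt" where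
  "famG d n m = (\<lambda>p. if p = Some (d, n) then fA (gg m) else -1)"
definition famU :: "nat \<Rightarrow> nat \<Rightarrow> (nat \<times> nat) option \<Rightarrow> fpt" where
  "famU d n = (\<lambda>p. if p = Some (d, n) then fA uu else 1)"
definition famC :: "complex \<Rightarrow> (nat \<times> nat) option \<Rightarrow> fpt" where
  "famC c = (\<lambda>p. fA (fscale c fone))"

definition "Tq d n m = abs_yq (famT d n m)"
definition "Gq d n m = abs_yq (famG d n m)"
definition "Uq d n = abs_yq (famU d n)"
definition "Cq c = abs_yq (famC c)"

lemmas fpolyI = fpoly.intros
lemma fpoly_gen[simp]: "fpoly (fgen x)" by (rule fpoly.intros)
lemma fpoly_scale1[simp]: "fpoly (fscale c fone)" by (auto intro: fpoly.intros)

lemma fA_scale_fR: "fR (fA (fscale c fone) * x) = fscale c (fR x)"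
  by (simp add: fR_mult fR_fA fmul_scale_left fmul_one_left)
lemma fA_scale_fR': "fR (x * fA (fscale c fone)) = fscale c (fR x)"
  by (simp add: fR_mult fR_fA fmul_scale_right fmul_one_right)

lemma ytl_inst:
  assumes d: "0 < d"
  shows "ytl (Tq d n) (Gq d n) (Uq d n) Cq d n"
  unfolding ytl_def
proof (intro conjI allI impI)
  show "0 < d" by (rule d)
  fix x y :: complex
  show "Cq (x + y) = Cq x + Cq y"
    unfolding Cq_def plus_yq.abs_eq
    apply (rule abs_eqI, rule fR_zero_Iof, rule fR_eq0)
    apply (simp add: famC_def fR_add fR_fA fR_sub)
    apply (simp add: fsub_def fadd_def fscale_def fzero_def algebra_simps)
    done
  show "Cq (x * y) = Cq x * Cq y"
    unfolding Cq_def times_yq.abs_eq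
    apply (rule abs_eqI, rule fR_zero_Iof, rule fR_eq0)
    apply (simp add: famC_def fR_mult fR_fA fR_sub fmul_scale_left fmul_scale_right fmul_one_left)
    apply (simp add: fsub_def fscale_def fzero_def)
    done
next
  show "Cq 1 = 1"
    unfolding Cq_def one_yq.abs_eq
    apply (rule abs_eqI, rule fR_zero_Iof, rule fR_eq0)
    apply (simp add: famC_def fR_fA fR_one fR_sub)
    apply (simp add: fsub_def fscale_def fzero_def)
    done
next
  fix x :: complex and a :: yq
  show "Cq x * a = a * Cq x"
  proof -
    obtain A where a: "a = abs_yq A" using Quotient3_abs_rep[OF Quotient3_yq] by metis
    show ?thesis unfolding Cq_def a times_yq.abs_eq
      apply (rule abs_eqI, rule fR_zero_Iof, rule fR_eq0)
      apply (simp add: famC_def fR_sub fA_scale_fR fA_scale_fR')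
      apply (simp add: fsub_def fzero_def)
      done
  qed
next
  fix m m' :: nat
  assume h: "1 \<le> m" "m \<le> n" "1 \<le> m'" "m' \<le> n"
  show "Tq d n m * Tq d n m' = Tq d n m' * Tq d n m"
    unfolding Tq_def times_yq.abs_eq
  proof (rule abs_eqI)
    fix p show "fR ((famT d n m * famT d n m') p - (famT d n m' * famT d n m) p) \<in> Iof p"
    proof (cases "p = Some (d, n)")
      case True
      have "fsub (fmul (tt m) (tt m')) (fmul (tt m') (tt m)) \<in> fideal (ytl_rels d n)"
        by (rule fideal.gen, rule rel_TT) (use h in auto)
      then show ?thesis using True by (simp add: famT_def fR_sub fR_mult fR_fA Iof_some)
    next
      case False then show ?thesis by (intro fR_zero_Iof) (simp add: famT_def)
    qed
  qed
next
  fix m :: nat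
  assume h: "1 \<le> m" "m \<le> n"
  show "Tq d n m ^ d = 1"
    unfolding Tq_def abs_pow one_yq.abs_eq
  proof (rule abs_eqI)
    fix p show "fR ((famT d n m ^ d) p - 1 p) \<in> Iof p"
    proof (cases "p = Some (d, n)")
      case True
      have "fsub (fpow (tt m) d) fone \<in> fideal (ytl_rels d n)"
        by (rule fideal.gen, rule rel_Tpow) (use h in auto)
      then show ?thesis using True by (simp add: famT_def fR_sub fR_pow fR_fA Iof_some fun_pow_apply fR_one)
    next
      case False then show ?thesis by (intro fR_zero_Iof) (simp add: famT_def fun_pow_apply)
    qed
  qed
next
  fix k m :: nat
  assume h: "1 \<le> k" "k \<le> n - 1" "1 \<le> m" "m \<le> n"
  show "Tq d n m * Gq d n k = Gq d n k * Tq d n (Defs.transp k m)"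
    unfolding Tq_def Gq_def times_yq.abs_eq
  proof (rule abs_eqI)
    fix p show "fR ((famT d n m * famG d n k) p - (famG d n k * famT d n (Defs.transp k m)) p) \<in> Iof p"
    proof (cases "p = Some (d, n)")
      case True
      have "fsub (fmul (tt m) (gg k)) (fmul (gg k) (tt (Defs.transp k m))) \<in> fideal (ytl_rels d n)"
        by (rule fideal.gen, rule rel_TG) (use h in auto)
      then show ?thesis using True by (simp add: famT_def famG_def fR_sub fR_mult fR_fA Iof_some)
    next
      case False then show ?thesis by (intro fR_zero_Iof) (simp add: famT_def famG_def)
    qed
  qed
next
  fix k k' :: nat
  assume h: "1 \<le> k" "k \<le> n - 1" "1 \<le> k'" "k' \<le> n - 1" "k + 1 < k' \<or> k' + 1 < k"
  show "Gq d n k * Gq d n k' = Gq d n k' * Gq d n k"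
    unfolding Gq_def times_yq.abs_eq
  proof (rule abs_eqI)
    fix p show "fR ((famG d n k * famG d n k') p - (famG d n k' * famG d n k) p) \<in> Iof p"
    proof (cases "p = Some (d, n)")
      case True
      have "fsub (fmul (gg k) (gg k')) (fmul (gg k') (gg k)) \<in> fideal (ytl_rels d n)"
        by (rule fideal.gen, rule rel_GG) (use h in auto)
      then show ?thesis using True by (simp add: famG_def fR_sub fR_mult fR_fA Iof_some)
    next
      case False then show ?thesis by (intro fR_zero_Iof) (simp add: famG_def)
    qed
  qed
next
  fix k :: nat
  assume h: "1 \<le> k" "k \<le> n - 1"
  show "Gq d n k * Gq d n k = 1 + (Uq d n - 1) * (Cq (1 / of_nat d) *
      (\<Sum>s = 0..<d. Tq d n k ^ s * Tq d n (k + 1) ^ ((d - s) mod d))) +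
      (Uq d n - 1) * (Cq (1 / of_nat d) *
      (\<Sum>s = 0..<d. Tq d n k ^ s * Tq d n (k + 1) ^ ((d - s) mod d))) * Gq d n k"
    unfolding Tq_def Gq_def Uq_def Cq_def abs_pow times_yq.abs_eq abs_sum one_yq.abs_eq minus_yq.abs_eq plus_yq.abs_eq
    apply (rule abs_eqI)
    subgoal for p
    proof (cases "p = Some (d, n)")
      case True
      have "fsub (fmul (gg k) (gg k))
          (fadd fone (fadd (fmul (fsub uu fone) (ee d k))
                           (fmul (fmul (fsub uu fone) (ee d k)) (gg k)))) \<in> fideal (ytl_rels d n)"
        by (rule fideal.gen, rule rel_Gsq) (use h in auto)
      then show ?thesis using True
        by (simp add: famT_def famG_def famU_def famC_def fun_pow_apply fun_sum_apply Iof_some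
            fR_sub fR_add fR_mult fR_pow fR_sum fR_fA fR_one fpoly_pow ee_def fmul_scale_left fmul_one_left fadd_assoc)
    next
      case False then show ?thesis
        by (intro fR_zero_Iof) (simp add: famT_def famG_def famU_def famC_def fun_pow_apply fun_sum_apply)
    qed
    done
next
  fix k :: nat
  assume h: "1 \<le> k" "k + 2 \<le> n"
  show "Gq d n k * Gq d n (k + 1) * Gq d n k + Gq d n k * Gq d n (k + 1) + Gq d n (k + 1) * Gq d n k +
       Gq d n k + Gq d n (k + 1) + 1 = 0"
    unfolding Gq_def times_yq.abs_eq one_yq.abs_eq plus_yq.abs_eq zero_yq.abs_eq
    apply (rule abs_eqI)
    subgoal for p
    proof (cases "p = Some (d, n)")
      case True
      have "fsumset {0..<6::nat} (\<lambda>q. [fprod [gg k, gg (k+1), gg k], fmul (gg k) (gg (k+1)),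
          fmul (gg (k+1)) (gg k), gg k, gg (k+1), fone] ! q) \<in> fideal (ytl_rels d n)"
        by (rule fideal.gen, rule rel_YTL) (use h in auto)
      then show ?thesis using True
        by (simp add: famG_def Iof_some ytl_elem_eq fR_sub fR_add fR_mult fR_fA fR_one fR_zero)
    next
      case False then show ?thesis
        by (intro fR_zero_Iof) (simp add: famG_def)
    qed
    done
qed

definition hh :: "fa \<times> int \<Rightarrow> fa" where "hh x = fmul (upow (snd x)) (fst x)"

lemma Lspan_alt: "Lspan X = {(\<lambda>w. \<Sum>x\<in>F. c x * hh x w) | F c. finite F \<and> fst ` F \<subseteq> X}"
  unfolding Lspan_def fsumset_def fscale_def hh_def by (simp add: case_prod_unfold)

lemma Lspan_zero: "fzero \<in> Lspan X"
  unfolding Lspan_alt by (rule CollectI, rule exI[of _ "{}"]) (auto simp: fzero_def)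

lemma Lspan_base: "s \<in> X \<Longrightarrow> s \<in> Lspan X"
  unfolding Lspan_alt
proof (intro CollectI exI conjI)
  assume "s \<in> X"
  show "s = (\<lambda>w. \<Sum>x\<in>{(s, 0)}. (\<lambda>_. 1) x * hh x w)"
    by (simp add: hh_def upow_def fpow_def fprod_def fmul_one_left)
  show "finite {(s, 0::int)}" by simp
  show "fst ` {(s, 0::int)} \<subseteq> X" using \<open>s \<in> X\<close> by simp
qed

lemma Lspan_add:
  assumes "a \<in> Lspan X" "b \<in> Lspan X" shows "fadd a b \<in> Lspan X"
proof -
  have "\<exists>F1 c1. a = (\<lambda>w. \<Sum>x\<in>F1. c1 x * hh x w) \<and> finite F1 \<and> fst ` F1 \<subseteq> X"
    using assms(1) unfolding Lspan_alt by simp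
  then obtain F1 c1 where 1: "a = (\<lambda>w. \<Sum>x\<in>F1. c1 x * hh x w)" "finite F1" "fst ` F1 \<subseteq> X"
    by blast
  have "\<exists>F2 c2. b = (\<lambda>w. \<Sum>x\<in>F2. c2 x * hh x w) \<and> finite F2 \<and> fst ` F2 \<subseteq> X"
    using assms(2) unfolding Lspan_alt by simp
  then obtain F2 c2 where 2: "b = (\<lambda>w. \<Sum>x\<in>F2. c2 x * hh x w)" "finite F2" "fst ` F2 \<subseteq> X"
    by blast
  let ?c = "\<lambda>x. (if x \<in> F1 then c1 x else 0) + (if x \<in> F2 then c2 x else 0)"
  have "fadd a b = (\<lambda>w. \<Sum>x\<in>F1 \<union> F2. ?c x * hh x w)"
  proof
    fix w
    have e: "?c x * hh x w = (if x \<in> F1 then c1 x * hh x w else 0) + (if x \<in> F2 then c2 x * hh x w else 0)" for x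
      by (simp add: distrib_right)
    have "(\<Sum>x\<in>F1 \<union> F2. ?c x * hh x w) =
       (\<Sum>x\<in>F1 \<union> F2. if x \<in> F1 then c1 x * hh x w else 0) + (\<Sum>x\<in>F1 \<union> F2. if x \<in> F2 then c2 x * hh x w else 0)"
      by (simp only: e sum.distrib)
    also have "\<dots> = (\<Sum>x\<in>F1. c1 x * hh x w) + (\<Sum>x\<in>F2. c2 x * hh x w)"
    proof -
      have "(\<Sum>x\<in>F1 \<union> F2. if x \<in> F1 then c1 x * hh x w else 0) = (\<Sum>x\<in>(F1 \<union> F2) \<inter> F1. c1 x * hh x w)"
        by (rule sum.inter_restrict[symmetric]) (use 1 2 in simp)
      moreover have "(\<Sum>x\<in>F1 \<union> F2. if x \<in> F2 then c2 x * hh x w else 0) = (\<Sum>x\<in>(F1 \<union> F2) \<inter> F2. c2 x * hh x w)"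
        by (rule sum.inter_restrict[symmetric]) (use 1 2 in simp)
      moreover have "(F1 \<union> F2) \<inter> F1 = F1" "(F1 \<union> F2) \<inter> F2 = F2" by auto
      ultimately show ?thesis by simp
    qed
    finally show "fadd a b w = (\<Sum>x\<in>F1 \<union> F2. ?c x * hh x w)"
      using 1 2 by (simp add: fadd_def)
  qed
  then show ?thesis unfolding Lspan_alt
    by (intro CollectI exI[of _ "F1 \<union> F2"] exI[of _ ?c] conjI) (use 1 2 in auto)
qed

lemma Lspan_scale:
  assumes "a \<in> Lspan X" shows "fscale c a \<in> Lspan X"
proof -
  have "\<exists>F1 c1. a = (\<lambda>w. \<Sum>x\<in>F1. c1 x * hh x w) \<and> finite F1 \<and> fst ` F1 \<subseteq> X"
    using assms(1) unfolding Lspan_alt by simp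
  then obtain F1 c1 where 1: "a = (\<lambda>w. \<Sum>x\<in>F1. c1 x * hh x w)" "finite F1" "fst ` F1 \<subseteq> X"
    by blast
  have "fscale c a = (\<lambda>w. \<Sum>x\<in>F1. (c * c1 x) * hh x w)"
    using 1 by (simp add: fscale_def sum_distrib_left mult.assoc)
  then show ?thesis unfolding Lspan_alt
    by (intro CollectI exI[of _ F1] exI[of _ "\<lambda>x. c * c1 x"] conjI) (use 1 in auto)
qed

lemma fA_fR: "fA (fR x) = x" by (rule fR_inverse)

lemma tmA_q:
  assumes d: "0 < d"
  shows "ytl.tmA (Tq d n) n r = abs_yq (prod_list (map (\<lambda>m. famT d n m ^ r m) [1..<n+1]))"
proof -
  have "ytl.tmA (Tq d n) n r = prod_list (map (\<lambda>m. Tq d n m ^ r m) [1..<n+1])"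
    by (rule ytl.tmA_def[OF ytl_inst[OF d]])
  also have "\<dots> = prod_list (map (\<lambda>m. abs_yq (famT d n m ^ r m)) [1..<n+1])"
    by (simp only: Tq_def abs_pow)
  also have "\<dots> = abs_yq (prod_list (map (\<lambda>m. famT d n m ^ r m) [1..<n+1]))"
    by (rule abs_prod_list)
  finally show ?thesis .
qed

lemma gikA_q:
  assumes d: "0 < d"
  shows "ytl.gikA (Gq d n) p = abs_yq (prod_list (map (\<lambda>(i,k). prod_list (map (\<lambda>m. famG d n (i - m)) [0..<k+1])) p))"
proof -
  have in1: "prod_list (map (\<lambda>m. Gq d n (i - m)) xs) = abs_yq (prod_list (map (\<lambda>m. famG d n (i - m)) xs))" for i xs
    unfolding Gq_def by (rule abs_prod_list)
  have "ytl.gikA (Gq d n) p = prod_list (map (\<lambda>(i,k). prod_list (map (\<lambda>m. Gq d n (i - m)) [0..<k+1])) p)"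
    by (rule ytl.gikA_def[OF ytl_inst[OF d]])
  also have "map (\<lambda>(i,k). prod_list (map (\<lambda>m. Gq d n (i - m)) [0..<k+1])) p
     = map (\<lambda>x. abs_yq ((\<lambda>(i,k). prod_list (map (\<lambda>m. famG d n (i - m)) [0..<k+1])) x)) p"
    by (intro map_cong refl) (auto simp: in1 simp del: upt_Suc)
  also have "prod_list \<dots> = abs_yq (prod_list (map (\<lambda>(i,k). prod_list (map (\<lambda>m. famG d n (i - m)) [0..<k+1])) p))"
    by (rule abs_prod_list)
  finally show ?thesis .
qed

lemma famT_p0: "fR ((prod_list (map (\<lambda>m. famT d n m ^ r m) xs)) (Some (d, n))) = fprod (map (\<lambda>m. fpow (tt m) (r m)) xs)"
  by (induction xs) (simp_all add: fR_one fprod_def fR_mult fun_pow_apply fR_pow famT_def fR_fA)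

lemma famG_inner_p0: "fR ((prod_list (map (\<lambda>m. famG d n (i - m)) xs)) (Some (d, n))) = fprod (map (\<lambda>m. gg (i - m)) xs)"
  by (induction xs) (simp_all add: fR_one fprod_def fR_mult famG_def fR_fA)

lemma famG_p0: "fR ((prod_list (map (\<lambda>(i,k). prod_list (map (\<lambda>m. famG d n (i - m)) [0..<k+1])) p)) (Some (d, n))) = gik p"
proof (induction p)
  case Nil then show ?case by (simp add: gik_def fprod_def fR_one)
next
  case (Cons x p)
  obtain i k where x: "x = (i, k)" by fastforce
  have "fR ((prod_list (map (\<lambda>(i,k). prod_list (map (\<lambda>m. famG d n (i - m)) [0..<k+1])) (x # p))) (Some (d, n)))
      = fmul (fR ((prod_list (map (\<lambda>m. famG d n (i - m)) [0..<k+1])) (Some (d, n))))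
             (fR ((prod_list (map (\<lambda>(i,k). prod_list (map (\<lambda>m. famG d n (i - m)) [0..<k+1])) p)) (Some (d, n))))"
    by (simp add: x fR_mult del: upt_Suc)
  also have "\<dots> = gik (x # p)"
    by (simp only: famG_inner_p0 Cons.IH) (simp add: gik_def fprod_def x del: upt_Suc)
  finally show ?case .
qed

lemma Ls_to_Lspan:
  assumes d: "0 < d" and L: "L \<in> ytl.Ls (Tq d n) (Gq d n) Cq d n"
  shows "\<exists>F. L = abs_yq F \<and> fR (F (Some (d, n))) \<in> Lspan (Slt d n 2)"
proof (rule ytl.Ls.induct[OF ytl_inst[OF d] L])
  show "\<exists>F. 0 = abs_yq F \<and> fR (F (Some (d, n))) \<in> Lspan (Slt d n 2)"
    by (rule exI[of _ 0]) (simp add: zero_yq.abs_eq fR_zero Lspan_zero)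
next
  fix r p assume LsB: "r \<in> exps d n" "p \<in> Tn n" "gdeg p < 2"
  let ?F = "prod_list (map (\<lambda>m. famT d n m ^ r m) [1..<n+1]) *
            prod_list (map (\<lambda>(i,k). prod_list (map (\<lambda>m. famG d n (i - m)) [0..<k+1])) p)"
  have "fR (?F (Some (d, n))) = fmul (tmono n r) (gik p)"
    by (simp only: times_fun_apply fR_mult famT_p0 famG_p0 tmono_def)
  moreover have "fmul (tmono n r) (gik p) \<in> Slt d n 2" using LsB by (auto simp: Slt_def)
  ultimately have "fR (?F (Some (d, n))) \<in> Lspan (Slt d n 2)" by (simp add: Lspan_base)
  moreover have "ytl.tmA (Tq d n) n r * ytl.gikA (Gq d n) p = abs_yq ?F"
    by (simp only: tmA_q[OF d] gikA_q[OF d] times_yq.abs_eq)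
  ultimately show "\<exists>F. ytl.tmA (Tq d n) n r * ytl.gikA (Gq d n) p = abs_yq F \<and> fR (F (Some (d, n))) \<in> Lspan (Slt d n 2)" by blast
next
  fix a b
  assume "\<exists>F. a = abs_yq F \<and> fR (F (Some (d, n))) \<in> Lspan (Slt d n 2)"
    "\<exists>F. b = abs_yq F \<and> fR (F (Some (d, n))) \<in> Lspan (Slt d n 2)"
  then obtain Fa Fb where "a = abs_yq Fa" "fR (Fa (Some (d, n))) \<in> Lspan (Slt d n 2)"
    "b = abs_yq Fb" "fR (Fb (Some (d, n))) \<in> Lspan (Slt d n 2)" by blast
  then show "\<exists>F. a + b = abs_yq F \<and> fR (F (Some (d, n))) \<in> Lspan (Slt d n 2)"
    by (intro exI[of _ "Fa + Fb"]) (simp add: plus_yq.abs_eq fR_add Lspan_add)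
next
  fix a c
  assume "\<exists>F. a = abs_yq F \<and> fR (F (Some (d, n))) \<in> Lspan (Slt d n 2)"
  then obtain Fa where "a = abs_yq Fa" "fR (Fa (Some (d, n))) \<in> Lspan (Slt d n 2)" by blast
  then show "\<exists>F. Cq c * a = abs_yq F \<and> fR (F (Some (d, n))) \<in> Lspan (Slt d n 2)"
    by (intro exI[of _ "famC c * Fa"]) (simp add: Cq_def times_yq.abs_eq famC_def fA_scale_fR Lspan_scale)
qed

lemma exps_finite: "finite (exps d n)"
proof -
  let ?f = "\<lambda>xs j. if 1 \<le> j \<and> j \<le> n then xs ! (j - 1) else (0::nat)"
  have "exps d n \<subseteq> ?f ` {xs. set xs \<subseteq> {..<d} \<and> length xs = n}"
  proof
    fix r assume r: "r \<in> exps d n"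
    have "r = ?f (map r [1..<n+1])"
    proof
      fix j show "r j = ?f (map r [1..<n+1]) j"
        using r by (cases "1 \<le> j \<and> j \<le> n") (auto simp: exps_def nth_map_upt simp del: upt_Suc)
    qed
    moreover have "map r [1..<n+1] \<in> {xs. set xs \<subseteq> {..<d} \<and> length xs = n}"
      using r by (auto simp: exps_def)
    ultimately show "r \<in> ?f ` {xs. set xs \<subseteq> {..<d} \<and> length xs = n}" by blast
  qed
  moreover have "finite {xs. set xs \<subseteq> {..<d::nat} \<and> length xs = n}"
    by (rule finite_lists_length_eq) simp
  ultimately show ?thesis by (rule finite_subset[OF _ finite_imageI])
qed

definition ind :: "nat \<Rightarrow> nat \<Rightarrow> nat" where "ind m = (\<lambda>k. if k = m then 1 else 0)"

lemma xvar_ind: "2 \<le> d \<Longrightarrow> xvar d m = (\<lambda>r. if r = ind m then 1 else 0)"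
proof -
  assume "2 \<le> d"
  then have h: "1 mod d = (1::nat)" by simp
  show ?thesis unfolding xvar_def ind_def h ..
qed

lemma ind_exps: "2 \<le> d \<Longrightarrow> 1 \<le> m \<Longrightarrow> m \<le> n \<Longrightarrow> ind m \<in> exps d n"
  by (auto simp: exps_def ind_def)

lemma fprod_ind: "distinct xs \<Longrightarrow>
  fprod (map (\<lambda>j. fpow (tt j) (ind m j)) xs) = (if m \<in> set xs then tt m else fone)"
proof (induction xs)
  case Nil then show ?case by (simp add: fprod_def)
next
  case (Cons x xs)
  show ?case
  proof (cases "x = m")
    case True
    then have "m \<notin> set xs" using Cons by auto
    then show ?thesis using Cons True
      by (simp add: fprod_def ind_def fpow_def fmul_one_right)
  next
    case False
    then show ?thesis using Cons
      by (simp add: fprod_def ind_def fpow_def fmul_one_left)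
  qed
qed

lemma tmono_ind: "1 \<le> m \<Longrightarrow> m \<le> n \<Longrightarrow> tmono n (ind m) = tt m"
  unfolding tmono_def by (simp add: fprod_ind del: upt_Suc)

lemma fprod_fones: "fprod (map (\<lambda>j. fpow (tt j) 0) xs) = fone"
  by (induction xs) (simp_all add: fprod_def fpow_def fmul_one_left)

lemma tword_ij: "tword n (\<lambda>_. 0) [i, j] = fmul (gg i) (gg j)"
  unfolding tword_def tmono_def fprod_fones
  by (simp add: fmul_one_left fprod_def fmul_one_right)

lemma evalA_P:
  assumes d: "2 \<le> d" and r: "1 \<le> i" "i + 1 \<le> n" "1 \<le> j" "j + 1 \<le> n"
  shows "evalA d n (\<lambda>r. xvar d i r + xvar d (i+1) r - xvar d j r - xvar d (j+1) r)
       = fsub (fsub (fadd (tt i) (tt (i+1))) (tt j)) (tt (j+1))"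
proof
  fix w
  have one: "(\<Sum>r\<in>exps d n. xvar d m r * tmono n r w) = tt m w" if "1 \<le> m" "m \<le> n" for m
  proof -
    have "(\<Sum>r\<in>exps d n. xvar d m r * tmono n r w) = (\<Sum>r\<in>exps d n. if r = ind m then tmono n r w else 0)"
      using d by (intro sum.cong) (auto simp: xvar_ind)
    also have "\<dots> = tmono n (ind m) w" using ind_exps[OF d that] exps_finite by simp
    finally show ?thesis using tmono_ind[OF that] by simp
  qed
  have "evalA d n (\<lambda>r. xvar d i r + xvar d (i+1) r - xvar d j r - xvar d (j+1) r) w
      = (\<Sum>r\<in>exps d n. xvar d i r * tmono n r w) + (\<Sum>r\<in>exps d n. xvar d (i+1) r * tmono n r w)
        - (\<Sum>r\<in>exps d n. xvar d j r * tmono n r w) - (\<Sum>r\<in>exps d n. xvar d (j+1) r * tmono n r w)"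
    by (simp add: evalA_def fsumset_def fscale_def algebra_simps sum.distrib sum_subtractf)
  also have "\<dots> = tt i w + tt (i+1) w - tt j w - tt (j+1) w"
    using r by (simp add: one)
  finally show "evalA d n (\<lambda>r. xvar d i r + xvar d (i+1) r - xvar d j r - xvar d (j+1) r) w
      = fsub (fsub (fadd (tt i) (tt (i+1))) (tt j)) (tt (j+1)) w"
    by (simp add: fsub_def fadd_def)
qed

lemma loc_result:
  assumes d: "0 < d" and ij: "1 \<le> i" "j + 1 \<le> n" "1 \<le> j" "i + 1 \<le> n" "i + 1 < j \<or> j + 1 < i"
  shows "(Tq d n i + Tq d n (Suc i) - Tq d n j - Tq d n (Suc j)) * (Gq d n i * Gq d n j)
           \<in> ytl.Ls (Tq d n) (Gq d n) Cq d n"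
proof (cases "i + 1 < j")
  case True
  then show ?thesis using ytl.main_loc[OF ytl_inst[OF d], of i j] ij by simp
next
  case False
  then have ji: "j + 1 < i" using ij by simp
  have inst: "ytl (Tq d n) (Gq d n) (Uq d n) Cq d n" by (rule ytl_inst[OF d])
  have L: "(Tq d n j + Tq d n (Suc j) - Tq d n i - Tq d n (Suc i)) * (Gq d n j * Gq d n i)
      \<in> ytl.Ls (Tq d n) (Gq d n) Cq d n"
    using ytl.main_loc[OF inst, of j i] ij ji by simp
  have L2: "Cq (-1) * ((Tq d n j + Tq d n (Suc j) - Tq d n i - Tq d n (Suc i)) * (Gq d n j * Gq d n i))
      \<in> ytl.Ls (Tq d n) (Gq d n) Cq d n"
    by (rule ytl.Ls.LsC[OF inst L])
  have c: "Cq (-1) = -1" using ytl.C_minus[OF inst, of 1] ytl.C_one[OF inst] by simp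
  have g: "Gq d n j * Gq d n i = Gq d n i * Gq d n j"
    using ytl.GG[OF inst, of j i] ij ji by simp
  have "Cq (-1) * ((Tq d n j + Tq d n (Suc j) - Tq d n i - Tq d n (Suc i)) * (Gq d n j * Gq d n i))
     = (Tq d n i + Tq d n (Suc i) - Tq d n j - Tq d n (Suc j)) * (Gq d n i * Gq d n j)"
    by (simp add: c g algebra_simps)
  then show ?thesis using L2 by simp
qed

theorem mainTheorem15:
  fixes d n i j :: nat
  assumes "1 \<le> d" and "3 \<le> n"
    and "1 \<le> i" and "i \<le> n - 1" and "1 \<le> j" and "j \<le> n - 1"
    and "i + 1 < j \<or> j + 1 < i"
  shows "(\<lambda>r. xvar d i r + xvar d (i+1) r - xvar d j r - xvar d (j+1) r)
           \<in> Rset d n (\<lambda>_. 0) [i, j]"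
proof (cases "d = 1")
  case True
  have P0: "(\<lambda>r. xvar d i r + xvar d (i+1) r - xvar d j r - xvar d (j+1) r) = (\<lambda>r. 0)"
  proof -
    have h: "1 mod d = (0::nat)" using True by simp
    show ?thesis unfolding xvar_def h by simp
  qed
  have e0: "evalA d n (\<lambda>r. 0) = fzero" by (auto simp: evalA_def fsumset_def fscale_def fzero_def)
  have z: "fsub (fmul fzero (tword n (\<lambda>_. 0) [i, j])) fzero = fzero"
    by (simp only: fmul_zero_left) (simp add: fsub_def fzero_def)
  have m: "fsub (fmul (evalA d n (\<lambda>r. 0)) (tword n (\<lambda>_. 0) [i, j])) fzero \<in> fideal (ytl_rels d n)"
    unfolding e0 z by (rule fideal.zero)
  show ?thesis unfolding Rset_def P0
  proof (rule CollectI, rule conjI)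
    show "(\<lambda>r. 0) \<in> Adn d n" by (simp add: Adn_def)
    show "\<exists>y\<in>Lspan (Slt d n (length [i, j])).
      fsub (fmul (evalA d n (\<lambda>r. 0)) (tword n (\<lambda>_. 0) [i, j])) y \<in> fideal (ytl_rels d n)"
      by (rule bexI[of _ fzero], rule m, rule Lspan_zero)
  qed
next
  case False
  then have d2: "2 \<le> d" using assms(1) by simp
  have d: "0 < d" using d2 by simp
  have r: "1 \<le> i" "i + 1 \<le> n" "1 \<le> j" "j + 1 \<le> n" using assms by auto
  let ?P = "\<lambda>r. xvar d i r + xvar d (i+1) r - xvar d j r - xvar d (j+1) r"
  have Adn: "?P \<in> Adn d n"
  proof -
    have "r \<in> exps d n" if h: "?P r \<noteq> 0" for r
    proof -
      have "r = ind i \<or> r = ind (i+1) \<or> r = ind j \<or> r = ind (j+1)"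
      proof (rule ccontr)
        assume "\<not> (r = ind i \<or> r = ind (i+1) \<or> r = ind j \<or> r = ind (j+1))"
        then have "?P r = 0" by (simp add: xvar_ind[OF d2])
        with h show False by simp
      qed
      then show ?thesis using ind_exps[OF d2] r by auto
    qed
    then show ?thesis by (auto simp: Adn_def)
  qed
  have LL: "(Tq d n i + Tq d n (Suc i) - Tq d n j - Tq d n (Suc j)) * (Gq d n i * Gq d n j)
           \<in> ytl.Ls (Tq d n) (Gq d n) Cq d n"
    by (rule loc_result[OF d]) (use assms in auto)
  obtain F where F: "(Tq d n i + Tq d n (Suc i) - Tq d n j - Tq d n (Suc j)) * (Gq d n i * Gq d n j) = abs_yq F"
     "fR (F (Some (d, n))) \<in> Lspan (Slt d n 2)"
    using Ls_to_Lspan[OF d LL] by blast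
  let ?FX = "(famT d n i + famT d n (Suc i) - famT d n j - famT d n (Suc j)) * (famG d n i * famG d n j)"
  have "(Tq d n i + Tq d n (Suc i) - Tq d n j - Tq d n (Suc j)) * (Gq d n i * Gq d n j) = abs_yq ?FX"
    by (simp only: Tq_def Gq_def plus_yq.abs_eq minus_yq.abs_eq times_yq.abs_eq)
  then have "abs_yq ?FX = abs_yq F" using F(1) by simp
  then have "yrel ?FX F" by (simp only: yq.abs_eq_iff)
  then have "fR (?FX (Some (d, n)) - F (Some (d, n))) \<in> Iof (Some (d, n))"
    by (simp add: yrel_def)
  moreover have "fR (?FX (Some (d, n))) = fmul (evalA d n ?P) (tword n (\<lambda>_. 0) [i, j])"
    by (simp add: evalA_P[OF d2 r, simplified] tword_ij famT_def famG_def fR_mult fR_add fR_sub fR_fA)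
  ultimately have "fsub (fmul (evalA d n ?P) (tword n (\<lambda>_. 0) [i, j])) (fR (F (Some (d, n))))
      \<in> fideal (ytl_rels d n)"
    by (simp add: fR_sub Iof_some)
  note mem = this
  have len: "length [i, j] = 2" by simp
  show ?thesis unfolding Rset_def len
  proof (rule CollectI, rule conjI)
    show "?P \<in> Adn d n" by (rule Adn)
    show "\<exists>y\<in>Lspan (Slt d n 2). fsub (fmul (evalA d n ?P) (tword n (\<lambda>_. 0) [i, j])) y \<in> fideal (ytl_rels d n)"
      by (rule bexI[of _ "fR (F (Some (d, n)))"], rule mem, rule F(2))
  qed
qed


end
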